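(* Suppose that on every level $\ell=1,\dots,L-1$ the flux coarse degrees of freedom are the averages over every face. Fix a level $\ell$ and $r^\ell\in (U^\ell)'$, and let $(u^\ell,p^\ell)\in(U^\ell,Q^\ell)$ be the output of the Multilevel BDDC preconditioner applied to $(r^\ell,0)$. Then $u^\ell$ is divergence-free in the sense that $b(u^\ell,q)=0$ for all $q\in Q^\ell$.
   Context: Setting. $\Omega\subset\mathbb R^2$ is a bounded polygonal domain, $k$ is a coefficient that is constant, $k_i>0$, on each top-level subdomain (more generally a symmetric uniformly positive definite matrix), and for flux fields $u,v$ and scalar $q$ we set $a(u,v)=\int k^{-1}u\cdot v\,dx$, $b(u,q)=-\int(\nabla\cdot u)\,q\,dx$, where for functions that may be discontinuous across subdomain boundaries the integrals are taken piecewise over the subdomains (and the $a$-norm $\|v\|_a=\sqrt{a(v,v)}$ likewise). Level 0: a triangulation of $\Omega$ into (quadrilateral) elements of size $h=H^0$; $U$ is the lowest-order Raviart–Thomas (RT0) space with zero normal component on $\partial\Omega$ and $Q$ the piecewise constants with zero mean on $\Omega$. For levels $\ell=1,\dots,L-1$ there are nested nonoverlapping decompositions of $\Omega$ into level-$\ell$ substructures $\Omega^\ell_i$, $i=1,\dots,N^\ell$, each a union of level-$(\ell-1)$ substructures (level-0 substructures are the elements), forming a conforming quasi-uniform triangulation with characteristic size $H^\ell$. A level-$\ell$ face is the intersection of the boundaries of two adjacent level-$\ell$ substructures; $\Gamma^\ell$ is the set of level-$\ell$ degrees of freedom shared by two level-$\ell$ substructures. Level-1 degrees of freedom are the RT0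 flux degrees of freedom; level-$\ell$ degrees of freedom ($\ell\ge2$) are the level-$(\ell-1)$ flux coarse degrees of freedom. Pressure spaces: $Q^1=Q$, $Q^\ell=Q^\ell_0\oplus Q^\ell_I$, where $Q^\ell_0$ consists of functions constant on each $\Omega^\ell_i$ with zero mean on $\Omega$, $Q^\ell_I=Q^\ell_1\times\dots\times Q^\ell_{N^\ell}$ with $Q^\ell_i$ the functions of $Q^\ell$ supported in $\Omega^\ell_i$ with zero mean on $\Omega^\ell_i$; $Q^{\ell+1}=Q^\ell_0$. Flux spaces: $U^1=U$; $W^\ell=W^\ell_1\times\dots\times W^\ell_{N^\ell}$, where $W^\ell_i$ is the space of flux functions on $\Omega^\ell_i$ (spanned by level-$\ell$ shape functions) with all degrees of freedom on $\partial\Omega^\ell_i\cap\partial\Omega$ zero; $U^\ell\subset W^\ell$ is the subspace of functions continuous across $\Gamma^\ell$; $U^\ell_I\subset U^\ell$ the functions whose degrees of freedom on $\Gamma^\ell$ vanish. $P^\ell$ maps $w\in W^\ell$ to $(u_I,p_I)\in(U^\ell_I,Q^\ell_I)$ solving $a(u_I,v_I)+b(v_I,p_I)=a(w,v_I)$ for all $v_I\in U^\ell_I$ and $b(u_I,q_I)=b(w,q_I)$ for all $q_I\in Q^\ell_I$; we write $(I-P^\ell)w:=w-u_I$, and $w$ is called Stokes harmonic (on level $\ell$) if $u_I=0$. The flux coarse degrees of freedom on level $\ell$ are averages of level-$\ell$ flux degrees of freedom over faces. $\widetilde W^\ell\subset W^\ell$: functions whose flux coarse degrees of freedom have a common value on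 each face shared by two adjacent level-$\ell$ substructures and vanish on $\partial\Omega$; $\widetilde W^\ell_\Delta\subset W^\ell$: functions all of whose flux coarse degrees of freedom vanish; $\widetilde W^\ell_\Pi\subset\widetilde W^\ell$: Stokes harmonic functions in $\widetilde W^\ell$ (uniquely determined by their coarse degrees of freedom), so $\widetilde W^\ell=\widetilde W^\ell_\Delta\oplus\widetilde W^\ell_\Pi$; $U^{\ell+1}=\widetilde W^\ell_\Pi$. $E^\ell:\widetilde W^\ell\to U^\ell$ is the projection averaging the values of each interface degree of freedom $x\in\partial\Omega^\ell_i\cap\partial\Omega^\ell_j$ with weights $e_i(x)=k_i^{-\gamma}/(k_i^{-\gamma}+k_j^{-\gamma})$ for a fixed $\gamma\ge0$ (weight 1 for interior degrees of freedom). Multilevel BDDC preconditioner $(r^\ell,0)\mapsto(u^\ell,p^\ell)$. Downward sweep, for $k=\ell,\dots,L-1$: (i) find $(u^k_I,p^k_I)\in(U^k_I,Q^k_I)$ with $a(u^k_I,v_I)+b(v_I,p^k_I)=\langle r^k,v_I\rangle$ for all $v_I\in U^k_I$ and $b(u^k_I,q_I)=0$ for all $q_I\in Q^k_I$; (ii) set $\langle r^k_B,v\rangle=\langle r^k,v\rangle-a(u^k_I,v)-b(v,p^k_I)$ for $v\in U^k$; (iii) find $(w^k_\Delta,p^k_{I\Delta})\in(\widetilde W^k_\Delta,Q^k_I)$ with $a(w^k_\Delta,z)+b(z,p^k_{I\Delta})=\langle r^k_B,E^kz\rangle$ for all $z\in\widetilde W^k_\Delta$ and $b(w^k_\Delta,q_I)=0$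 for all $q_I\in Q^k_I$; (iv) the coarse problem is: find $(w^k_\Pi,p^k_0)\in(\widetilde W^k_\Pi,Q^k_0)$ with $a(w^k_\Pi,z)+b(z,p^k_0)=\langle r^k_B,E^kz\rangle$ for all $z\in\widetilde W^k_\Pi$ and $b(w^k_\Pi,q_0)=0$ for all $q_0\in Q^k_0$; if $k=L-1$ solve it exactly and set $u^L=w^{L-1}_\Pi$, $p^L=p^{L-1}_0$; otherwise define $r^{k+1}\in(U^{k+1})'$ by $\langle r^{k+1},v\rangle=\langle r^k_B,E^kv\rangle$ and continue. Upward sweep, for $k=L-1,\dots,\ell$: set $u^k_B=E^k(w^k_\Delta+u^{k+1})$ and $p^k_0=p^{k+1}$; find $(v^k_I,q^k_I)\in(U^k_I,Q^k_I)$ with $a(v^k_I,z_I)+b(z_I,q^k_I)=a(u^k_B,z_I)$ for all $z_I\in U^k_I$ and $b(v^k_I,\bar q_I)=b(u^k_B,\bar q_I)$ for all $\bar q_I\in Q^k_I$; set $u^k=u^k_I+u^k_B-v^k_I$, $p^k=p^k_I+p^k_0-q^k_I$. *)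

theory Defs
  imports Complex_Main
begin

(* 'e : the elements (quadrilaterals) of the level-0 triangulation
   'f : the edges of the triangulation
   A (possibly broken) lowest-order Raviart--Thomas flux function is stored
   by its element-wise degrees of freedom:  v T e  is the normal flux
   (integral of v.n_e over e, n_e a FIXED normal of the edge e) of the
   restriction of v to the element T.  Every flux space of every level is a
   subspace of these fully broken functions.
   ------------------------------------------------------------------------ *)

type_synonym ('e,'f) flux = "'e \<Rightarrow> 'f \<Rightarrow> real"

record ('e,'f) bddc_setting =
  m_inc   :: "'e \<Rightarrow> 'f \<Rightarrow> real"        (* +1/-1: e is an edge of T, n_e points out of/into T; 0: e not an edge of T *)
  m_len   :: "'f \<Rightarrow> real"
  m_area  :: "'e \<Rightarrow> real"
  m_A     :: "'e \<Rightarrow> 'f \<Rightarrow> 'f \<Rightarrow> real"  (* local matrix of a on element T: int_T k^-1 phi_e . phi_e' *)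
  m_k     :: "'e \<Rightarrow> real"
  m_gamma :: real
  m_dec   :: "nat \<Rightarrow> 'e set set"         (* level-l substructures, as sets of elements *)
  m_L     :: nat

definition af :: "('e::finite,'f::finite) bddc_setting \<Rightarrow> ('e,'f) flux \<Rightarrow> ('e,'f) flux \<Rightarrow> real" where
  "af M v w = (\<Sum>T\<in>UNIV. \<Sum>e\<in>UNIV. \<Sum>e'\<in>UNIV. m_A M T e e' * v T e * w T e')"

(* b(v,q) = - int div v q ;  int_T div v = outward flux through the edges of T *)
definition bf :: "('e::finite,'f::finite) bddc_setting \<Rightarrow> ('e,'f) flux \<Rightarrow> ('e \<Rightarrow> real) \<Rightarrow> real" where
  "bf M v q = - (\<Sum>T\<in>UNIV. q T * (\<Sum>e\<in>UNIV. m_inc M T e * v T e))"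

definition edges_between :: "('e::finite,'f::finite) bddc_setting \<Rightarrow> 'e set \<Rightarrow> 'e set \<Rightarrow> 'f set" where
  "edges_between M S S' = {e. \<exists>T\<in>S. \<exists>T'\<in>S'. m_inc M T e \<noteq> 0 \<and> m_inc M T' e \<noteq> 0}"

(* level-m faces: ordered pairs of adjacent distinct level-m substructures
   (level-0 substructures are the elements, level-0 faces are the interior edges) *)
definition faces :: "('e::finite,'f::finite) bddc_setting \<Rightarrow> nat \<Rightarrow> ('e set \<times> 'e set) set" where
  "faces M m = {(S,S'). S \<in> m_dec M m \<and> S' \<in> m_dec M m \<and> S \<noteq> S' \<and> edges_between M S S' \<noteq> {}}"

definition flen :: "('e::finite,'f::finite) bddc_setting \<Rightarrow> 'e set \<Rightarrow> 'e set \<Rightarrow> real" where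
  "flen M S S' = (\<Sum>e\<in>edges_between M S S'. m_len M e)"

(* average over the face (S,S') of the normal flux (normal pointing from S to S')
   of v, as seen from the side S.  For a level-(l-1) face this is the value of
   the corresponding level-l degree of freedom (level-1 dofs: edges = level-0 faces). *)
definition dval :: "('e::finite,'f::finite) bddc_setting \<Rightarrow> ('e,'f) flux \<Rightarrow> 'e set \<Rightarrow> 'e set \<Rightarrow> real" where
  "dval M v S S' = (\<Sum>e\<in>edges_between M S S'. \<Sum>T\<in>S. m_inc M T e * v T e) / flen M S S'"

(* Gamma^l: level-l dofs (level-(l-1) faces) shared by two different level-l substructures *)
definition Gamma :: "('e::finite,'f::finite) bddc_setting \<Rightarrow> nat \<Rightarrow> ('e set \<times> 'e set) set" where
  "Gamma M l = {(S,S') \<in> faces M (l - 1). \<not> (\<exists>R\<in>m_dec M l. S \<subseteq> R \<and> S' \<subseteq> R)}"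

(* flux coarse dof of level l on the level-l face (R,R'), seen from R:
   the average over the face of the level-l flux dofs lying on it
   (weighted by their measure, i.e. the mean normal flux over the face) *)
definition cavg :: "('e::finite,'f::finite) bddc_setting \<Rightarrow> nat \<Rightarrow> ('e,'f) flux \<Rightarrow> 'e set \<Rightarrow> 'e set \<Rightarrow> real" where
  "cavg M l v R R' =
     (\<Sum>(S,S')\<in>{(S,S') \<in> faces M (l - 1). S \<subseteq> R \<and> S' \<subseteq> R'}. flen M S S' * dval M v S S') /
     (\<Sum>(S,S')\<in>{(S,S') \<in> faces M (l - 1). S \<subseteq> R \<and> S' \<subseteq> R'}. flen M S S')"

definition Qzero :: "('e::finite,'f::finite) bddc_setting \<Rightarrow> ('e \<Rightarrow> real) set" where
  "Qzero M = {q. (\<Sum>T\<in>UNIV. m_area M T * q T) = 0}"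

definition Q0 :: "('e::finite,'f::finite) bddc_setting \<Rightarrow> nat \<Rightarrow> ('e \<Rightarrow> real) set" where
  "Q0 M l = {q \<in> Qzero M. \<forall>R\<in>m_dec M l. \<forall>T\<in>R. \<forall>T'\<in>R. q T = q T'}"

definition Qsp :: "('e::finite,'f::finite) bddc_setting \<Rightarrow> nat \<Rightarrow> ('e \<Rightarrow> real) set" where
  "Qsp M l = (if l \<le> 1 then Qzero M else Q0 M (l - 1))"

(* Q^l_I = Q^l_1 x ... x Q^l_N, identified with the sums of its components:
   the functions of Q^l with zero mean on every level-l substructure *)
definition QI :: "('e::finite,'f::finite) bddc_setting \<Rightarrow> nat \<Rightarrow> ('e \<Rightarrow> real) set" where
  "QI M l = {q \<in> Qsp M l. \<forall>R\<in>m_dec M l. (\<Sum>T\<in>R. m_area M T * q T) = 0}"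

(* U = U^1: global RT0 space with zero normal flux on the boundary *)
definition RT0 :: "('e::finite,'f::finite) bddc_setting \<Rightarrow> ('e,'f) flux set" where
  "RT0 M = {v. (\<forall>T e. m_inc M T e = 0 \<longrightarrow> v T e = 0)
             \<and> (\<forall>T T' e. m_inc M T e \<noteq> 0 \<and> m_inc M T' e \<noteq> 0 \<longrightarrow> v T e = v T' e)
             \<and> (\<forall>T e. m_inc M T e \<noteq> 0 \<and> (\<forall>T'. m_inc M T' e \<noteq> 0 \<longrightarrow> T' = T) \<longrightarrow> v T e = 0)}"

(* W^l, given the global level-l space Uf whose elements are spanned by the
   level-l shape functions: product over the level-l substructures of the
   restrictions of such functions *)
definition Wof :: "('e::finite,'f::finite) bddc_setting \<Rightarrow> nat \<Rightarrow> ('e,'f) flux set \<Rightarrow> ('e,'f) flux set" where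
  "Wof M l Uf = {w. \<forall>R\<in>m_dec M l. \<exists>u\<in>Uf. \<forall>T\<in>R. w T = u T}"

(* W~^l : coarse dofs have a common value on each face (normal from R to R') *)
definition Wt_of :: "('e::finite,'f::finite) bddc_setting \<Rightarrow> nat \<Rightarrow> ('e,'f) flux set \<Rightarrow> ('e,'f) flux set" where
  "Wt_of M l Ws = {w \<in> Ws. \<forall>(R,R')\<in>faces M l. cavg M l w R R' = - cavg M l w R' R}"

definition WtD_of :: "('e::finite,'f::finite) bddc_setting \<Rightarrow> nat \<Rightarrow> ('e,'f) flux set \<Rightarrow> ('e,'f) flux set" where
  "WtD_of M l Ws = {w \<in> Ws. \<forall>(R,R')\<in>faces M l. cavg M l w R R' = 0}"

definition WtPi_of :: "('e::finite,'f::finite) bddc_setting \<Rightarrow> nat \<Rightarrow> ('e,'f) flux set \<Rightarrow> ('e,'f) flux set" where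
  "WtPi_of M l Ws = {w \<in> Wt_of M l Ws. (\<forall>q\<in>QI M l. bf M w q = 0)
                     \<and> (\<exists>p\<in>QI M l. \<forall>z\<in>WtD_of M l Ws. af M w z = bf M z p)}"

(* the global level-l space spanned by level-l shape functions:
   level 1: U;  level l+1: W~^l_Pi *)
primrec Ufull :: "('e::finite,'f::finite) bddc_setting \<Rightarrow> nat \<Rightarrow> ('e,'f) flux set" where
  "Ufull M 0 = {}"
| "Ufull M (Suc m) = (if m = 0 then RT0 M else WtPi_of M m (Wof M m (Ufull M m)))"

definition FluxW :: "('e::finite,'f::finite) bddc_setting \<Rightarrow> nat \<Rightarrow> ('e,'f) flux set" where
  "FluxW M l = Wof M l (Ufull M l)"

definition FluxU :: "('e::finite,'f::finite) bddc_setting \<Rightarrow> nat \<Rightarrow> ('e,'f) flux set" where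
  "FluxU M l = {w \<in> FluxW M l. \<forall>(S,S')\<in>Gamma M l. dval M w S S' = - dval M w S' S}"

definition FluxUI :: "('e::finite,'f::finite) bddc_setting \<Rightarrow> nat \<Rightarrow> ('e,'f) flux set" where
  "FluxUI M l = {w \<in> FluxU M l. \<forall>(S,S')\<in>Gamma M l. dval M w S S' = 0}"

definition Wtil :: "('e::finite,'f::finite) bddc_setting \<Rightarrow> nat \<Rightarrow> ('e,'f) flux set" where
  "Wtil M l = Wt_of M l (FluxW M l)"

definition WtilD :: "('e::finite,'f::finite) bddc_setting \<Rightarrow> nat \<Rightarrow> ('e,'f) flux set" where
  "WtilD M l = WtD_of M l (FluxW M l)"

definition WtilPi :: "('e::finite,'f::finite) bddc_setting \<Rightarrow> nat \<Rightarrow> ('e,'f) flux set" where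
  "WtilPi M l = WtPi_of M l (FluxW M l)"

(* value of k on an element set (k is constant on the substructures, see valid_setting) *)
definition kval :: "('e::finite,'f::finite) bddc_setting \<Rightarrow> 'e set \<Rightarrow> real" where
  "kval M S = m_k M (SOME T. T \<in> S)"

definition ewt :: "('e::finite,'f::finite) bddc_setting \<Rightarrow> 'e set \<Rightarrow> 'e set \<Rightarrow> real" where
  "ewt M S S' = kval M S powr (- m_gamma M) / (kval M S powr (- m_gamma M) + kval M S' powr (- m_gamma M))"

(* Erel M l w u  <->  u = E^l w : u is the function of U^l whose level-l dofs
   are the (weighted) averages of those of w (interior dofs unchanged).
   The value of the dof (S,S') with normal from S to S' seen from the
   side of S' is  - dval w S' S. *)
definition Erel :: "('e::finite,'f::finite) bddc_setting \<Rightarrow> nat \<Rightarrow> ('e,'f) flux \<Rightarrow> ('e,'f) flux \<Rightarrow> bool" where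
  "Erel M l w u \<longleftrightarrow> u \<in> FluxU M l \<and>
     (\<forall>(S,S')\<in>faces M (l - 1).
        dval M u S S' = (if (S,S') \<in> Gamma M l
                         then ewt M S S' * dval M w S S' - ewt M S' S * dval M w S' S
                         else dval M w S S'))"

(* one level k of the preconditioner applied to (r,0), producing (u,p);
   C rB un pn describes how (u^{k+1},p^{k+1}) is obtained from the
   functional r^k_B (coarse solve, or recursion to the next level) *)
definition level_step ::
  "('e::finite,'f::finite) bddc_setting \<Rightarrow> nat \<Rightarrow> (('e,'f) flux \<Rightarrow> real)
   \<Rightarrow> ((('e,'f) flux \<Rightarrow> real) \<Rightarrow> ('e,'f) flux \<Rightarrow> ('e \<Rightarrow> real) \<Rightarrow> bool)
   \<Rightarrow> ('e,'f) flux \<Rightarrow> ('e \<Rightarrow> real) \<Rightarrow> bool" where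
  "level_step M k r C u p \<longleftrightarrow>
    (\<exists>uI pI wD pID un pn uB vI qI.
       \<comment> \<open>(i)\<close>
       uI \<in> FluxUI M k \<and> pI \<in> QI M k
       \<and> (\<forall>v\<in>FluxUI M k. af M uI v + bf M v pI = r v)
       \<and> (\<forall>q\<in>QI M k. bf M uI q = 0)
       \<comment> \<open>(ii),(iii): r_B v = r v - a(uI,v) - b(v,pI)\<close>
       \<and> wD \<in> WtilD M k \<and> pID \<in> QI M k
       \<and> (\<forall>z\<in>WtilD M k. \<forall>y. Erel M k z y \<longrightarrow>
             af M wD z + bf M z pID = r y - af M uI y - bf M y pI)
       \<and> (\<forall>q\<in>QI M k. bf M wD q = 0)
       \<comment> \<open>(iv): coarse problem / next level\<close>
       \<and> C (\<lambda>y. r y - af M uI y - bf M y pI) un pn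
       \<comment> \<open>upward sweep\<close>
       \<and> Erel M k (\<lambda>T e. wD T e + un T e) uB
       \<and> vI \<in> FluxUI M k \<and> qI \<in> QI M k
       \<and> (\<forall>z\<in>FluxUI M k. af M vI z + bf M z qI = af M uB z)
       \<and> (\<forall>q\<in>QI M k. bf M vI q = bf M uB q)
       \<and> u = (\<lambda>T e. uI T e + uB T e - vI T e) \<and> p = (\<lambda>T. pI T + pn T - qI T))"

definition coarse_solve ::
  "('e::finite,'f::finite) bddc_setting \<Rightarrow> nat \<Rightarrow> (('e,'f) flux \<Rightarrow> real)
   \<Rightarrow> ('e,'f) flux \<Rightarrow> ('e \<Rightarrow> real) \<Rightarrow> bool" where
  "coarse_solve M k rB w p0 \<longleftrightarrow>
     w \<in> WtilPi M k \<and> p0 \<in> Q0 M k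
     \<and> (\<forall>z\<in>WtilPi M k. \<forall>y. Erel M k z y \<longrightarrow> af M w z + bf M z p0 = rB y)
     \<and> (\<forall>q\<in>Q0 M k. bf M w q = 0)"

(* bddc M n k r u p : (u,p) is the output of the multilevel BDDC preconditioner
   started on level k with (r,0), where n = L-1-k levels remain above k *)
primrec bddc ::
  "('e::finite,'f::finite) bddc_setting \<Rightarrow> nat \<Rightarrow> nat \<Rightarrow> (('e,'f) flux \<Rightarrow> real)
   \<Rightarrow> ('e,'f) flux \<Rightarrow> ('e \<Rightarrow> real) \<Rightarrow> bool" where
  "bddc M 0 k r u p = level_step M k r (coarse_solve M k) u p"
| "bddc M (Suc n) k r u p =
     level_step M k r
       (\<lambda>rB un pn. \<exists>rn. (\<forall>v\<in>FluxU M (Suc k). \<forall>y. Erel M k v y \<longrightarrow> rn v = rB y)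
                        \<and> bddc M n (Suc k) rn un pn) u p"

definition lin_functional_on :: "('e,'f) flux set \<Rightarrow> (('e,'f) flux \<Rightarrow> real) \<Rightarrow> bool" where
  "lin_functional_on Us r \<longleftrightarrow>
     (\<forall>x\<in>Us. \<forall>y\<in>Us. r (\<lambda>T e. x T e + y T e) = r x + r y) \<and> (\<forall>c. \<forall>x\<in>Us. r (\<lambda>T e. c * x T e) = c * r x)"

definition valid_setting :: "('e::finite,'f::finite) bddc_setting \<Rightarrow> bool" where
  "valid_setting M \<longleftrightarrow>
     \<comment> \<open>quadrilateral elements, edges with fixed normals\<close>
     (\<forall>T e. m_inc M T e \<in> {-1, 0, 1})
     \<and> (\<forall>T. card {e. m_inc M T e \<noteq> 0} = 4)
     \<and> (\<forall>e. 1 \<le> card {T. m_inc M T e \<noteq> 0} \<and> card {T. m_inc M T e \<noteq> 0} \<le> 2)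
     \<and> (\<forall>T T' e. T \<noteq> T' \<and> m_inc M T e \<noteq> 0 \<and> m_inc M T' e \<noteq> 0 \<longrightarrow> m_inc M T' e = - m_inc M T e)
     \<and> (\<forall>e. m_len M e > 0) \<and> (\<forall>T. m_area M T > 0)
     \<comment> \<open>a: elementwise symmetric positive definite local matrices\<close>
     \<and> (\<forall>T e e'. m_A M T e e' = m_A M T e' e)
     \<and> (\<forall>T e e'. m_inc M T e = 0 \<or> m_inc M T e' = 0 \<longrightarrow> m_A M T e e' = 0)
     \<and> (\<forall>T x. (\<exists>e. m_inc M T e \<noteq> 0 \<and> x e \<noteq> 0) \<longrightarrow>
              (\<Sum>e\<in>UNIV. \<Sum>e'\<in>UNIV. m_A M T e e' * x e * x e') > 0)
     \<comment> \<open>coefficient and weights\<close>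
     \<and> (\<forall>T. m_k M T > 0) \<and> m_gamma M \<ge> 0
     \<comment> \<open>levels and nested decompositions\<close>
     \<and> m_L M \<ge> 2
     \<and> m_dec M 0 = {{T} | T. True}
     \<and> (\<forall>l. 1 \<le> l \<and> l \<le> m_L M - 1 \<longrightarrow>
            (\<forall>R\<in>m_dec M l. R \<noteq> {})
          \<and> (\<forall>R\<in>m_dec M l. \<forall>R'\<in>m_dec M l. R \<noteq> R' \<longrightarrow> R \<inter> R' = {})
          \<and> \<Union>(m_dec M l) = UNIV
          \<and> (\<forall>S\<in>m_dec M (l - 1). \<exists>R\<in>m_dec M l. S \<subseteq> R))
     \<comment> \<open>k constant on each top-level subdomain\<close>
     \<and> (\<forall>R\<in>m_dec M (m_L M - 1). \<forall>T\<in>R. \<forall>T'\<in>R. m_k M T = m_k M T')"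

end

theory Submission
  imports Defs
begin

definition adj :: "('e::finite,'f::finite) bddc_setting \<Rightarrow> 'f \<Rightarrow> 'e set" where
  "adj M e = {T. m_inc M T e \<noteq> 0}"

definition Phi :: "('e::finite,'f::finite) bddc_setting \<Rightarrow> ('e,'f) flux \<Rightarrow> 'e set \<Rightarrow> real" where
  "Phi M v X = (\<Sum>T\<in>X. \<Sum>e\<in>UNIV. m_inc M T e * v T e)"

definition Iin :: "('e::finite,'f::finite) bddc_setting \<Rightarrow> ('e,'f) flux \<Rightarrow> 'e set \<Rightarrow> real" where
  "Iin M v X = (\<Sum>T\<in>X. \<Sum>e\<in>UNIV. if adj M e \<subseteq> X then m_inc M T e * v T e else 0)"

definition num :: "('e::finite,'f::finite) bddc_setting \<Rightarrow> ('e,'f) flux \<Rightarrow> 'e set \<Rightarrow> 'e set \<Rightarrow> real" where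
  "num M v X X' = (\<Sum>e\<in>edges_between M X X'. \<Sum>T\<in>X. m_inc M T e * v T e)"

definition part :: "'e set set \<Rightarrow> bool" where
  "part P \<longleftrightarrow> (\<forall>R\<in>P. R \<noteq> {}) \<and> (\<forall>R\<in>P. \<forall>R'\<in>P. R \<noteq> R' \<longrightarrow> R \<inter> R' = {}) \<and> \<Union>P = UNIV"

definition sub :: "('e::finite,'f::finite) bddc_setting \<Rightarrow> nat \<Rightarrow> 'e set \<Rightarrow> 'e set \<Rightarrow> ('e set \<times> 'e set) set" where
  "sub M k X X' = {(S,S') \<in> faces M (k - 1). S \<subseteq> X \<and> S' \<subseteq> X'}"

lemma vcard0: "valid_setting M \<Longrightarrow> \<forall>e. 1 \<le> card {T. m_inc M T e \<noteq> 0} \<and> card {T. m_inc M T e \<noteq> 0} \<le> 2"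
  unfolding valid_setting_def by (elim conjE) assumption

lemma vcard: "valid_setting M \<Longrightarrow> card (adj M e) \<le> 2"
  unfolding adj_def using vcard0 by blast

lemma vopp0: "valid_setting M \<Longrightarrow> (\<forall>T T' e. T \<noteq> T' \<and> m_inc M T e \<noteq> 0 \<and> m_inc M T' e \<noteq> 0 \<longrightarrow> m_inc M T' e = - m_inc M T e)"
  unfolding valid_setting_def by (elim conjE) assumption

lemma vopp: "valid_setting M \<Longrightarrow> T \<noteq> T' \<Longrightarrow> T \<in> adj M e \<Longrightarrow> T' \<in> adj M e \<Longrightarrow> m_inc M T' e = - m_inc M T e"
  unfolding adj_def using vopp0 by blast

lemma vlen0: "valid_setting M \<Longrightarrow> (\<forall>e. m_len M e > 0) \<and> (\<forall>T. m_area M T > 0)"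
  unfolding valid_setting_def by (elim conjE) (intro conjI; assumption)

lemma vlen: "valid_setting M \<Longrightarrow> m_len M e > 0"
  using vlen0 by blast

lemma varea: "valid_setting M \<Longrightarrow> m_area M T > 0"
  using vlen0 by blast

lemma vk0: "valid_setting M \<Longrightarrow> (\<forall>T. m_k M T > 0)"
  unfolding valid_setting_def by (elim conjE) assumption

lemma vk: "valid_setting M \<Longrightarrow> m_k M T > 0"
  using vk0 by blast

lemma vdec00: "valid_setting M \<Longrightarrow> (\<forall>l. 1 \<le> l \<and> l \<le> m_L M - 1 \<longrightarrow>
            (\<forall>R\<in>m_dec M l. R \<noteq> {})
          \<and> (\<forall>R\<in>m_dec M l. \<forall>R'\<in>m_dec M l. R \<noteq> R' \<longrightarrow> R \<inter> R' = {})
          \<and> \<Union>(m_dec M l) = UNIV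
          \<and> (\<forall>S\<in>m_dec M (l - 1). \<exists>R\<in>m_dec M l. S \<subseteq> R))"
  unfolding valid_setting_def by (elim conjE) assumption

lemma vdec: "valid_setting M \<Longrightarrow> 1 \<le> l \<Longrightarrow> l \<le> m_L M - 1 \<Longrightarrow>
          (\<forall>R\<in>m_dec M l. R \<noteq> {})
          \<and> (\<forall>R\<in>m_dec M l. \<forall>R'\<in>m_dec M l. R \<noteq> R' \<longrightarrow> R \<inter> R' = {})
          \<and> \<Union>(m_dec M l) = UNIV
          \<and> (\<forall>S\<in>m_dec M (l - 1). \<exists>R\<in>m_dec M l. S \<subseteq> R)"
  using vdec00 by blast

lemma vdec0: "valid_setting M \<Longrightarrow> m_dec M 0 = {{T} | T. True}"
  unfolding valid_setting_def by (elim conjE) assumption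

lemma vtop: "valid_setting M \<Longrightarrow> R \<in> m_dec M (m_L M - 1) \<Longrightarrow> T \<in> R \<Longrightarrow> T' \<in> R \<Longrightarrow> m_k M T = m_k M T'"
proof -
  assume "valid_setting M" "R \<in> m_dec M (m_L M - 1)" "T \<in> R" "T' \<in> R"
  moreover have "\<forall>R\<in>m_dec M (m_L M - 1). \<forall>T\<in>R. \<forall>T'\<in>R. m_k M T = m_k M T'"
    using \<open>valid_setting M\<close> unfolding valid_setting_def by (elim conjE) assumption
  ultimately show ?thesis by blast
qed

lemma adj2:
  assumes "valid_setting M" "T \<in> adj M e" "T' \<in> adj M e" "T'' \<in> adj M e" "T \<noteq> T'"
  shows "T'' = T \<or> T'' = T'"
proof (rule ccontr)
  assume "\<not> ?thesis"
  then have "T'' \<noteq> T" "T'' \<noteq> T'" by auto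
  then have "card {T,T',T''} = 3" using assms(5) by simp
  moreover have "card {T,T',T''} \<le> card (adj M e)"
    by (rule card_mono) (use assms in auto)
  ultimately show False using vcard[OF assms(1), of e] by simp
qed

lemma part0: "part {{T::'e} | T. True}"
  unfolding part_def
proof (intro conjI)
  show "\<forall>R\<in>{{T::'e} |T. True}. R \<noteq> {}" by auto
  show "\<forall>R\<in>{{T::'e} |T. True}. \<forall>R'\<in>{{T} |T. True}. R \<noteq> R' \<longrightarrow> R \<inter> R' = {}" by auto
  show "\<Union> {{T::'e} |T. True} = UNIV" by auto
qed

lemma part_dec: "valid_setting M \<Longrightarrow> m \<le> m_L M - 1 \<Longrightarrow> part (m_dec M m)"
proof (cases "m = 0")
  case True
  assume v: "valid_setting M"
  have "m_dec M m = {{T} | T. True}" using True vdec0[OF v] by simp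
  then show ?thesis using part0 by simp
next
  case False
  assume v: "valid_setting M" "m \<le> m_L M - 1"
  have "1 \<le> m" using False by simp
  from vdec[OF v(1) this v(2)] show ?thesis unfolding part_def by (elim conjE) (intro conjI; assumption)
qed

lemma part_in: "part P \<Longrightarrow> \<exists>X\<in>P. T \<in> X"
proof -
  assume "part P"
  then have "T \<in> \<Union>P" unfolding part_def by simp
  then show ?thesis by (simp only: Union_iff)
qed

lemma part_uniq: "part P \<Longrightarrow> X \<in> P \<Longrightarrow> X' \<in> P \<Longrightarrow> T \<in> X \<Longrightarrow> T \<in> X' \<Longrightarrow> X = X'"
  unfolding part_def by blast

lemma part_ne: "part P \<Longrightarrow> X \<in> P \<Longrightarrow> X \<noteq> {}"
  unfolding part_def by blast

lemma vnest: "valid_setting M \<Longrightarrow> 1 \<le> l \<Longrightarrow> l \<le> m_L M - 1 \<Longrightarrow> S \<in> m_dec M (l - 1) \<Longrightarrow> \<exists>R\<in>m_dec M l. S \<subseteq> R"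
proof -
  assume a: "valid_setting M" "1 \<le> l" "l \<le> m_L M - 1" "S \<in> m_dec M (l - 1)"
  have "\<forall>S\<in>m_dec M (l - 1). \<exists>R\<in>m_dec M l. S \<subseteq> R" using vdec[OF a(1-3)] by (elim conjE)
  then show ?thesis using a(4) by (rule bspec)
qed

lemma refine:
  assumes "valid_setting M" "1 \<le> m" "m \<le> m_L M - 1" "S \<in> m_dec M (m - 1)" "X \<in> m_dec M m" "T \<in> S" "T \<in> X"
  shows "S \<subseteq> X"
proof -
  obtain R where R: "R \<in> m_dec M m" "S \<subseteq> R" using vnest[OF assms(1-4)] by (elim bexE)
  have "T \<in> R" using R(2) assms(6) by (rule subsetD)
  then have "R = X" using part_uniq[OF part_dec[OF assms(1,3)] R(1) assms(5)] assms(7) by simp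
  with R show ?thesis by simp
qed

lemma up:
  assumes "valid_setting M" "n \<le> m_L M - 1" "m \<le> n" "S \<in> m_dec M m"
  shows "\<exists>Z\<in>m_dec M n. S \<subseteq> Z"
  using assms(2,3)
proof (induction n)
  case 0
  then have "m = 0" by simp
  then show ?case using assms(4) by (intro bexI[of _ S]) simp_all
next
  case (Suc n)
  show ?case
  proof (cases "m = Suc n")
    case True then show ?thesis using assms(4) by (intro bexI[of _ S]) simp_all
  next
    case False
    then have "n \<le> m_L M - 1" "m \<le> n" using Suc.prems by simp_all
    then obtain Z where Z: "Z \<in> m_dec M n" "S \<subseteq> Z" using Suc.IH by blast
    have "1 \<le> Suc n" by simp
    then obtain R where R: "R \<in> m_dec M (Suc n)" "Z \<subseteq> R" using vnest[OF assms(1) _ Suc.prems(1), of Z] Z(1) by auto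
    show ?thesis using R Z by blast
  qed
qed

lemma cnt:
  assumes "finite Q" "\<forall>S1\<in>Q. \<forall>S2\<in>Q. S1 \<noteq> S2 \<longrightarrow> S1 \<inter> S2 = {}" "card A \<le> 2" "finite A" "T \<in> A"
    "\<forall>S'\<in>Q. T \<notin> S'"
  shows "(\<Sum>S'\<in>Q. if A \<inter> S' \<noteq> {} then 1 else 0 :: real) = (if \<exists>S'\<in>Q. A \<inter> S' \<noteq> {} then 1 else 0)"
proof (cases "\<exists>S'\<in>Q. A \<inter> S' \<noteq> {}")
  case False
  then show ?thesis by simp
next
  case True
  then obtain S0 where S0: "S0 \<in> Q" "A \<inter> S0 \<noteq> {}" by blast
  have oth: "A \<inter> S1 = {}" if "S1 \<in> Q" "S1 \<noteq> S0" for S1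
  proof (rule ccontr)
    assume "A \<inter> S1 \<noteq> {}"
    then obtain a1 where a1: "a1 \<in> A" "a1 \<in> S1" by blast
    obtain a0 where a0: "a0 \<in> A" "a0 \<in> S0" using S0 by blast
    have "a0 \<noteq> a1" using assms(2) S0(1) that a0 a1 by blast
    moreover have "T \<noteq> a0" "T \<noteq> a1" using assms(6) S0(1) that a0 a1 by auto
    ultimately have "card {T,a0,a1} = 3" by auto
    moreover have "card {T,a0,a1} \<le> card A" by (rule card_mono) (use assms a0 a1 in auto)
    ultimately show False using assms(3) by simp
  qed
  have "(\<Sum>S'\<in>Q. if A \<inter> S' \<noteq> {} then 1 else 0 :: real) = (if A \<inter> S0 \<noteq> {} then 1 else 0) + (\<Sum>S'\<in>Q - {S0}. if A \<inter> S' \<noteq> {} then 1 else 0)"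
    using sum.remove[OF assms(1) S0(1)] by blast
  also have "(\<Sum>S'\<in>Q - {S0}. if A \<inter> S' \<noteq> {} then 1 else 0 :: real) = 0"
    by (rule sum.neutral) (use oth in auto)
  finally show ?thesis using S0 True by simp
qed


lemma ind: "(if P then 1 else 0) * (x::real) = (if P then x else 0)"
  by simp

lemma finP: "finite (P :: ('e::finite) set set)"
  by (rule finite_subset[of _ UNIV]) simp_all

lemma num_alt:
  "num M v X X' = (\<Sum>T\<in>X. \<Sum>e\<in>UNIV. if adj M e \<inter> X' \<noteq> {} then m_inc M T e * v T e else 0)"
proof -
  have "num M v X X' = (\<Sum>T\<in>X. \<Sum>e\<in>edges_between M X X'. m_inc M T e * v T e)"
    unfolding num_def by (rule sum.swap)
  also have "\<dots> = (\<Sum>T\<in>X. \<Sum>e\<in>UNIV. if e \<in> edges_between M X X' then m_inc M T e * v T e else 0)"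
    by (rule sum.cong[OF refl]) (simp add: sum.If_cases)
  also have "\<dots> = (\<Sum>T\<in>X. \<Sum>e\<in>UNIV. if adj M e \<inter> X' \<noteq> {} then m_inc M T e * v T e else 0)"
  proof (rule sum.cong[OF refl], rule sum.cong[OF refl])
    fix T e assume T: "T \<in> X"
    show "(if e \<in> edges_between M X X' then m_inc M T e * v T e else 0) =
          (if adj M e \<inter> X' \<noteq> {} then m_inc M T e * v T e else 0)"
    proof (cases "m_inc M T e = 0")
      case True then show ?thesis by simp
    next
      case False
      then have "e \<in> edges_between M X X' \<longleftrightarrow> adj M e \<inter> X' \<noteq> {}"
        using T unfolding edges_between_def adj_def by blast
      then show ?thesis by simp
    qed
  qed
  finally show ?thesis .
qed

lemma eb_sym: "edges_between M X X' = edges_between M X' X"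
  unfolding edges_between_def by blast

lemma flen_sym: "flen M X X' = flen M X' X"
  unfolding flen_def using eb_sym by metis

lemma flen_pos:
  assumes "valid_setting M" "edges_between M S S' \<noteq> {}"
  shows "flen M S S' > 0"
  unfolding flen_def
  by (rule sum_pos) (simp_all add: assms(2) vlen[OF assms(1)])

lemma num_eq:
  assumes "valid_setting M"
  shows "flen M S S' * dval M v S S' = num M v S S'"
proof (cases "edges_between M S S' = {}")
  case True then show ?thesis unfolding num_def dval_def flen_def by simp
next
  case False
  then have "flen M S S' > 0" using flen_pos[OF assms] by blast
  then show ?thesis unfolding num_def dval_def by simp
qed

lemma num_empty: "edges_between M S S' = {} \<Longrightarrow> num M v S S' = 0"
  unfolding num_def by simp

lemma ptKC:
  assumes v: "valid_setting M" and P: "part P" and X: "X \<in> P" and T: "T \<in> X" "T \<in> adj M e"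
  shows "(if adj M e \<subseteq> X then 1 else 0) + (\<Sum>X'\<in>P - {X}. if adj M e \<inter> X' \<noteq> {} then 1 else 0) = (1::real)"
proof -
  have dis: "\<forall>S1\<in>P - {X}. \<forall>S2\<in>P - {X}. S1 \<noteq> S2 \<longrightarrow> S1 \<inter> S2 = {}"
    using P unfolding part_def by blast
  have nT: "\<forall>S'\<in>P - {X}. T \<notin> S'"
  proof
    fix S' assume "S' \<in> P - {X}"
    then show "T \<notin> S'" using part_uniq[OF P X, of S' T] T(1) by blast
  qed
  have c: "(\<Sum>X'\<in>P - {X}. if adj M e \<inter> X' \<noteq> {} then 1 else 0) =
        (if \<exists>S'\<in>P - {X}. adj M e \<inter> S' \<noteq> {} then 1 else (0::real))"
    by (rule cnt[OF finP dis vcard[OF v] finite[of "adj M e"] T(2) nT])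
  have eq: "(\<exists>S'\<in>P - {X}. adj M e \<inter> S' \<noteq> {}) \<longleftrightarrow> \<not> adj M e \<subseteq> X"
  proof
    assume "\<exists>S'\<in>P - {X}. adj M e \<inter> S' \<noteq> {}"
    then obtain S' a where "S' \<in> P" "S' \<noteq> X" "a \<in> adj M e" "a \<in> S'" by blast
    moreover have "a \<notin> X" using part_uniq[OF P X \<open>S' \<in> P\<close>, of a] calculation by blast
    ultimately show "\<not> adj M e \<subseteq> X" by blast
  next
    assume "\<not> adj M e \<subseteq> X"
    then obtain a where a: "a \<in> adj M e" "a \<notin> X" by blast
    obtain S' where "S' \<in> P" "a \<in> S'" using part_in[OF P] by blast
    then show "\<exists>S'\<in>P - {X}. adj M e \<inter> S' \<noteq> {}" using a by blast
  qed
  show ?thesis unfolding c using eq by simp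
qed

lemma KC:
  assumes v: "valid_setting M" and P: "part P" and X: "X \<in> P"
  shows "Phi M v X = Iin M v X + (\<Sum>X'\<in>P - {X}. num M v X X')"
proof -
  let ?f = "\<lambda>T e. m_inc M T e * v T e"
  have "(\<Sum>X'\<in>P - {X}. num M v X X') =
        (\<Sum>X'\<in>P - {X}. \<Sum>T\<in>X. \<Sum>e\<in>UNIV. (if adj M e \<inter> X' \<noteq> {} then 1 else 0) * ?f T e)"
    by (rule sum.cong[OF refl]) (simp add: num_alt ind)
  also have "\<dots> = (\<Sum>T\<in>X. \<Sum>e\<in>UNIV. \<Sum>X'\<in>P - {X}. (if adj M e \<inter> X' \<noteq> {} then 1 else 0) * ?f T e)"
    by (simp add: sum.swap[of _ "P - {X}"] sum.swap[of _ "P - {X}" UNIV])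
  also have "\<dots> = (\<Sum>T\<in>X. \<Sum>e\<in>UNIV. (\<Sum>X'\<in>P - {X}. if adj M e \<inter> X' \<noteq> {} then 1 else 0) * ?f T e)"
    by (simp add: sum_distrib_right)
  finally have A: "(\<Sum>X'\<in>P - {X}. num M v X X') = \<dots>" .
  have B: "Iin M v X = (\<Sum>T\<in>X. \<Sum>e\<in>UNIV. (if adj M e \<subseteq> X then 1 else 0) * ?f T e)"
    unfolding Iin_def by (simp add: ind)
  have "Iin M v X + (\<Sum>X'\<in>P - {X}. num M v X X') =
     (\<Sum>T\<in>X. \<Sum>e\<in>UNIV. ((if adj M e \<subseteq> X then 1 else 0) + (\<Sum>X'\<in>P - {X}. if adj M e \<inter> X' \<noteq> {} then 1 else 0)) * ?f T e)"
    unfolding A B by (simp add: sum.distrib[symmetric] distrib_right)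
  also have "\<dots> = (\<Sum>T\<in>X. \<Sum>e\<in>UNIV. ?f T e)"
  proof (rule sum.cong[OF refl], rule sum.cong[OF refl])
    fix T e assume T: "T \<in> X"
    show "((if adj M e \<subseteq> X then 1 else 0) + (\<Sum>X'\<in>P - {X}. if adj M e \<inter> X' \<noteq> {} then 1 else 0)) * ?f T e = ?f T e"
    proof (cases "m_inc M T e = 0")
      case True then show ?thesis by simp
    next
      case False
      then have "T \<in> adj M e" unfolding adj_def by simp
      then show ?thesis using ptKC[OF v P X T] by simp
    qed
  qed
  finally show ?thesis unfolding Phi_def by simp
qed


lemma sumpart:
  fixes P :: "('e::finite) set set"
  assumes P: "part P" and cov: "\<forall>T\<in>X. \<exists>S\<in>P. T \<in> S \<and> S \<subseteq> X"
  shows "(\<Sum>T\<in>X. g T) = (\<Sum>S\<in>{S\<in>P. S \<subseteq> X}. \<Sum>T\<in>S. g T)"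
proof -
  have X: "X = \<Union>{S\<in>P. S \<subseteq> X}" using cov by blast
  have d: "\<forall>A\<in>{S\<in>P. S \<subseteq> X}. \<forall>B\<in>{S\<in>P. S \<subseteq> X}. A \<noteq> B \<longrightarrow> A \<inter> B = {}"
    using P unfolding part_def by blast
  have "(\<Sum>T\<in>\<Union>{S\<in>P. S \<subseteq> X}. g T) = (\<Sum>S\<in>{S\<in>P. S \<subseteq> X}. \<Sum>T\<in>S. g T)"
    using sum.Union_disjoint[OF _ d, of g] by (simp add: comp_def)
  then show ?thesis using X by simp
qed

lemma sumall:
  fixes P :: "('e::finite) set set"
  assumes P: "part P"
  shows "(\<Sum>T\<in>UNIV. g T) = (\<Sum>S\<in>P. \<Sum>T\<in>S. g T)"
proof -
  have "\<forall>T\<in>UNIV. \<exists>S\<in>P. T \<in> S \<and> S \<subseteq> UNIV" using part_in[OF P] by blast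
  from sumpart[OF P this] show ?thesis by simp
qed

lemma cover_sub:
  assumes v: "valid_setting M" and k: "1 \<le> k" "k \<le> m_L M - 1" and X: "X \<in> m_dec M k"
  shows "\<forall>T\<in>X. \<exists>S\<in>m_dec M (k - 1). T \<in> S \<and> S \<subseteq> X"
proof
  fix T assume T: "T \<in> X"
  have "k - 1 \<le> m_L M - 1" using k by simp
  then obtain S where S: "S \<in> m_dec M (k - 1)" "T \<in> S" using part_in[OF part_dec[OF v]] by blast
  have "S \<subseteq> X" by (rule refine[OF v k S(1) X S(2) T])
  with S show "\<exists>S\<in>m_dec M (k - 1). T \<in> S \<and> S \<subseteq> X" by blast
qed

lemma ptRG:
  assumes v: "valid_setting M" and k: "1 \<le> k" "k \<le> m_L M - 1"
    and X: "X \<in> m_dec M k" and X': "X' \<in> m_dec M k" "X \<noteq> X'"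
    and T: "T \<in> X" "T \<in> adj M e"
  shows "(\<Sum>S'\<in>{S'\<in>m_dec M (k - 1). S' \<subseteq> X'}. if adj M e \<inter> S' \<noteq> {} then 1 else 0) =
         (if adj M e \<inter> X' \<noteq> {} then 1 else (0::real))"
proof -
  have Pk: "part (m_dec M k)" using part_dec[OF v k(2)] .
  have P': "part (m_dec M (k - 1))" using part_dec[OF v] k by simp
  have XX: "X \<inter> X' = {}" using Pk X X' unfolding part_def by blast
  let ?Q = "{S'\<in>m_dec M (k - 1). S' \<subseteq> X'}"
  have dis: "\<forall>S1\<in>?Q. \<forall>S2\<in>?Q. S1 \<noteq> S2 \<longrightarrow> S1 \<inter> S2 = {}"
    using P' unfolding part_def by blast
  have nT: "\<forall>S'\<in>?Q. T \<notin> S'" using XX T(1) by blast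
  have c: "(\<Sum>S'\<in>?Q. if adj M e \<inter> S' \<noteq> {} then 1 else 0) =
        (if \<exists>S'\<in>?Q. adj M e \<inter> S' \<noteq> {} then 1 else (0::real))"
    by (rule cnt[OF finP dis vcard[OF v] finite[of "adj M e"] T(2) nT])
  have eq: "(\<exists>S'\<in>?Q. adj M e \<inter> S' \<noteq> {}) \<longleftrightarrow> adj M e \<inter> X' \<noteq> {}"
  proof
    assume "\<exists>S'\<in>?Q. adj M e \<inter> S' \<noteq> {}"
    then show "adj M e \<inter> X' \<noteq> {}" by blast
  next
    assume "adj M e \<inter> X' \<noteq> {}"
    then obtain a where a: "a \<in> adj M e" "a \<in> X'" by blast
    obtain S' where S': "S' \<in> m_dec M (k - 1)" "a \<in> S'" using part_in[OF P'] by blast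
    have "S' \<subseteq> X'" by (rule refine[OF v k S'(1) X'(1) S'(2) a(2)])
    then show "\<exists>S'\<in>?Q. adj M e \<inter> S' \<noteq> {}" using S' a by blast
  qed
  show ?thesis unfolding c using eq by simp
qed

lemma RG:
  assumes v: "valid_setting M" and k: "1 \<le> k" "k \<le> m_L M - 1"
    and X: "X \<in> m_dec M k" and X': "X' \<in> m_dec M k" "X \<noteq> X'"
  shows "num M v X X' = (\<Sum>(S,S')\<in>sub M k X X'. num M v S S')"
proof -
  let ?f = "\<lambda>T e. m_inc M T e * v T e"
  let ?A = "{S\<in>m_dec M (k - 1). S \<subseteq> X}"
  let ?B = "{S'\<in>m_dec M (k - 1). S' \<subseteq> X'}"
  have Pk: "part (m_dec M k)" using part_dec[OF v k(2)] .
  have P': "part (m_dec M (k - 1))" using part_dec[OF v] k by simp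
  have XX: "X \<inter> X' = {}" using Pk X X' unfolding part_def by blast
  have "(\<Sum>(S,S')\<in>sub M k X X'. num M v S S') = (\<Sum>(S,S')\<in>?A \<times> ?B. num M v S S')"
  proof (rule sum.mono_neutral_left)
    show "finite (?A \<times> ?B)" by simp
    show "sub M k X X' \<subseteq> ?A \<times> ?B" unfolding sub_def faces_def by blast
    show "\<forall>i\<in>?A \<times> ?B - sub M k X X'. (case i of (S, S') \<Rightarrow> num M v S S') = 0"
    proof
      fix i assume i: "i \<in> ?A \<times> ?B - sub M k X X'"
      obtain S S' where ii: "i = (S,S')" by (cases i)
      have S: "S \<in> m_dec M (k - 1)" "S \<subseteq> X" "S' \<in> m_dec M (k - 1)" "S' \<subseteq> X'" using i ii by auto
      have "S \<noteq> {}" using part_ne[OF P' S(1)] .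
      then have "S \<noteq> S'" using S XX by blast
      then have "edges_between M S S' = {}" using i ii S unfolding sub_def faces_def by auto
      then show "(case i of (S, S') \<Rightarrow> num M v S S') = 0" using ii num_empty by simp
    qed
  qed
  also have "\<dots> = (\<Sum>S\<in>?A. \<Sum>S'\<in>?B. num M v S S')"
    by (rule sum.cartesian_product[symmetric])
  also have "\<dots> = (\<Sum>S\<in>?A. \<Sum>S'\<in>?B. \<Sum>T\<in>S. \<Sum>e\<in>UNIV. (if adj M e \<inter> S' \<noteq> {} then 1 else 0) * ?f T e)"
    by (simp add: num_alt ind)
  also have "\<dots> = (\<Sum>S\<in>?A. \<Sum>T\<in>S. \<Sum>e\<in>UNIV. (\<Sum>S'\<in>?B. if adj M e \<inter> S' \<noteq> {} then 1 else 0) * ?f T e)"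
  proof (rule sum.cong[OF refl])
    fix S assume "S \<in> ?A"
    have "(\<Sum>S'\<in>?B. \<Sum>T\<in>S. \<Sum>e\<in>UNIV. (if adj M e \<inter> S' \<noteq> {} then 1 else 0) * ?f T e)
        = (\<Sum>T\<in>S. \<Sum>S'\<in>?B. \<Sum>e\<in>UNIV. (if adj M e \<inter> S' \<noteq> {} then 1 else 0) * ?f T e)"
      by (rule sum.swap)
    also have "\<dots> = (\<Sum>T\<in>S. \<Sum>e\<in>UNIV. \<Sum>S'\<in>?B. (if adj M e \<inter> S' \<noteq> {} then 1 else 0) * ?f T e)"
      by (rule sum.cong[OF refl], rule sum.swap)
    also have "\<dots> = (\<Sum>T\<in>S. \<Sum>e\<in>UNIV. (\<Sum>S'\<in>?B. if adj M e \<inter> S' \<noteq> {} then 1 else 0) * ?f T e)"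
      by (simp only: sum_distrib_right)
    finally show "(\<Sum>S'\<in>?B. \<Sum>T\<in>S. \<Sum>e\<in>UNIV. (if adj M e \<inter> S' \<noteq> {} then 1 else 0) * ?f T e)
        = (\<Sum>T\<in>S. \<Sum>e\<in>UNIV. (\<Sum>S'\<in>?B. if adj M e \<inter> S' \<noteq> {} then 1 else 0) * ?f T e)" .
  qed
  also have "\<dots> = (\<Sum>S\<in>?A. \<Sum>T\<in>S. \<Sum>e\<in>UNIV. (if adj M e \<inter> X' \<noteq> {} then 1 else 0) * ?f T e)"
  proof (rule sum.cong[OF refl], rule sum.cong[OF refl], rule sum.cong[OF refl])
    fix S T e assume S: "S \<in> ?A" and T: "T \<in> S"
    show "(\<Sum>S'\<in>?B. if adj M e \<inter> S' \<noteq> {} then 1 else 0) * ?f T e = (if adj M e \<inter> X' \<noteq> {} then 1 else 0) * ?f T e"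
    proof (cases "m_inc M T e = 0")
      case True then show ?thesis by simp
    next
      case False
      then have "T \<in> adj M e" unfolding adj_def by simp
      moreover have "T \<in> X" using S T by blast
      ultimately show ?thesis using ptRG[OF v k X X', of T e] by simp
    qed
  qed
  also have "\<dots> = (\<Sum>T\<in>X. \<Sum>e\<in>UNIV. (if adj M e \<inter> X' \<noteq> {} then 1 else 0) * ?f T e)"
    by (rule sumpart[OF P' cover_sub[OF v k X], symmetric])
  also have "\<dots> = num M v X X'"
    by (simp add: num_alt ind)
  finally show ?thesis by simp
qed

lemma antisum:
  fixes g :: "'a \<Rightarrow> 'a \<Rightarrow> real"
  assumes "finite A" "\<forall>S\<in>A. \<forall>S'\<in>A. S \<noteq> S' \<longrightarrow> g S S' = - g S' S"
  shows "(\<Sum>S\<in>A. \<Sum>S'\<in>A - {S}. g S S') = 0"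
proof -
  define h where "h S S' = (if S = S' then 0 else g S S')" for S S'
  have 1: "(\<Sum>S'\<in>A - {S}. g S S') = (\<Sum>S'\<in>A. h S S')" if "S \<in> A" for S
  proof -
    have "(\<Sum>S'\<in>A. h S S') = h S S + (\<Sum>S'\<in>A - {S}. h S S')" using sum.remove[OF assms(1) that] by blast
    also have "\<dots> = (\<Sum>S'\<in>A - {S}. g S S')" unfolding h_def by (simp, rule sum.cong) auto
    finally show ?thesis by simp
  qed
  have e1: "(\<Sum>S\<in>A. \<Sum>S'\<in>A - {S}. g S S') = (\<Sum>S\<in>A. \<Sum>S'\<in>A. h S S')"
    using 1 by (rule sum.cong[OF refl])
  have "(\<Sum>S\<in>A. \<Sum>S'\<in>A. h S S') = (\<Sum>S'\<in>A. \<Sum>S\<in>A. h S S')" by (rule sum.swap)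
  also have "\<dots> = (\<Sum>S'\<in>A. \<Sum>S\<in>A. - h S' S)"
  proof (rule sum.cong[OF refl], rule sum.cong[OF refl])
    fix S' S assume a: "S' \<in> A" "S \<in> A"
    show "h S S' = - h S' S"
    proof (cases "S = S'")
      case True then show ?thesis unfolding h_def by simp
    next
      case False
      then have "g S S' = - g S' S" using assms(2) a by blast
      then show ?thesis unfolding h_def using False by simp
    qed
  qed
  also have "\<dots> = - (\<Sum>S\<in>A. \<Sum>S'\<in>A. h S S')" by (simp add: sum_negf)
  finally show ?thesis using e1 by linarith
qed


lemma ptDI:
  assumes v: "valid_setting M" and k: "1 \<le> k" "k \<le> m_L M - 1" and X: "X \<in> m_dec M k"
    and S: "S \<in> m_dec M (k - 1)" "S \<subseteq> X" and T: "T \<in> S" "T \<in> adj M e"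
  shows "(if adj M e \<subseteq> X then 1 else 0) = (if adj M e \<subseteq> S then 1 else 0) +
     (\<Sum>S'\<in>{S\<in>m_dec M (k - 1). S \<subseteq> X} - {S}. if adj M e \<inter> S' \<noteq> {} then 1 else (0::real))"
proof -
  have P': "part (m_dec M (k - 1))" using part_dec[OF v] k by simp
  let ?Q = "{S\<in>m_dec M (k - 1). S \<subseteq> X} - {S}"
  have dis: "\<forall>S1\<in>?Q. \<forall>S2\<in>?Q. S1 \<noteq> S2 \<longrightarrow> S1 \<inter> S2 = {}"
    using P' unfolding part_def by blast
  have nT: "\<forall>S'\<in>?Q. T \<notin> S'"
  proof
    fix S' assume "S' \<in> ?Q"
    then show "T \<notin> S'" using part_uniq[OF P' S(1), of S' T] T(1) by blast
  qed
  have c: "(\<Sum>S'\<in>?Q. if adj M e \<inter> S' \<noteq> {} then 1 else 0) =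
        (if \<exists>S'\<in>?Q. adj M e \<inter> S' \<noteq> {} then 1 else (0::real))"
    by (rule cnt[OF finP dis vcard[OF v] finite[of "adj M e"] T(2) nT])
  have eq: "(\<exists>S'\<in>?Q. adj M e \<inter> S' \<noteq> {}) \<longleftrightarrow> adj M e \<subseteq> X \<and> \<not> adj M e \<subseteq> S"
  proof
    assume "\<exists>S'\<in>?Q. adj M e \<inter> S' \<noteq> {}"
    then obtain S' a where S': "S' \<in> m_dec M (k - 1)" "S' \<subseteq> X" "S' \<noteq> S" and a: "a \<in> adj M e" "a \<in> S'" by blast
    have aS: "a \<notin> S" using part_uniq[OF P' S(1) S'(1), of a] S'(3) a(2) by blast
    then have Ta: "T \<noteq> a" using T(1) by blast
    have "adj M e \<subseteq> X"
    proof
      fix b assume "b \<in> adj M e"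
      then have "b = T \<or> b = a" using adj2[OF v T(2) a(1) _ Ta] by blast
      then show "b \<in> X" using T(1) S(2) a(2) S'(2) by blast
    qed
    then show "adj M e \<subseteq> X \<and> \<not> adj M e \<subseteq> S" using aS a(1) by blast
  next
    assume "adj M e \<subseteq> X \<and> \<not> adj M e \<subseteq> S"
    then obtain b where b: "b \<in> adj M e" "b \<notin> S" "b \<in> X" by blast
    obtain S' where S': "S' \<in> m_dec M (k - 1)" "b \<in> S'" using part_in[OF P'] by blast
    have "S' \<subseteq> X" by (rule refine[OF v k S'(1) X S'(2) b(3)])
    moreover have "S' \<noteq> S" using S'(2) b(2) by blast
    ultimately show "\<exists>S'\<in>?Q. adj M e \<inter> S' \<noteq> {}" using S' b by blast
  qed
  show ?thesis unfolding c using eq S(2) by auto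
qed

lemma DI:
  assumes v: "valid_setting M" and k: "1 \<le> k" "k \<le> m_L M - 1" and X: "X \<in> m_dec M k"
  shows "Iin M v X = (\<Sum>S\<in>{S\<in>m_dec M (k - 1). S \<subseteq> X}. Iin M v S) +
           (\<Sum>S\<in>{S\<in>m_dec M (k - 1). S \<subseteq> X}. \<Sum>S'\<in>{S\<in>m_dec M (k - 1). S \<subseteq> X} - {S}. num M v S S')"
proof -
  let ?f = "\<lambda>T e. m_inc M T e * v T e"
  let ?A = "{S\<in>m_dec M (k - 1). S \<subseteq> X}"
  have P': "part (m_dec M (k - 1))" using part_dec[OF v] k by simp
  have "Iin M v X = (\<Sum>T\<in>X. \<Sum>e\<in>UNIV. (if adj M e \<subseteq> X then 1 else 0) * ?f T e)"
    unfolding Iin_def by (simp add: ind)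
  also have "\<dots> = (\<Sum>S\<in>?A. \<Sum>T\<in>S. \<Sum>e\<in>UNIV. (if adj M e \<subseteq> X then 1 else 0) * ?f T e)"
    by (rule sumpart[OF P' cover_sub[OF v k X]])
  also have "\<dots> = (\<Sum>S\<in>?A. \<Sum>T\<in>S. \<Sum>e\<in>UNIV. ((if adj M e \<subseteq> S then 1 else 0) +
     (\<Sum>S'\<in>?A - {S}. if adj M e \<inter> S' \<noteq> {} then 1 else 0)) * ?f T e)"
  proof (rule sum.cong[OF refl], rule sum.cong[OF refl], rule sum.cong[OF refl])
    fix S T e assume S: "S \<in> ?A" and T: "T \<in> S"
    show "(if adj M e \<subseteq> X then 1 else 0) * ?f T e = ((if adj M e \<subseteq> S then 1 else 0) +
     (\<Sum>S'\<in>?A - {S}. if adj M e \<inter> S' \<noteq> {} then 1 else 0)) * ?f T e"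
    proof (cases "m_inc M T e = 0")
      case True then show ?thesis by simp
    next
      case False
      then have "T \<in> adj M e" unfolding adj_def by simp
      moreover have "S \<in> m_dec M (k - 1)" "S \<subseteq> X" using S by auto
      ultimately show ?thesis using ptDI[OF v k X _ _ T, of e] by simp
    qed
  qed
  also have "\<dots> = (\<Sum>S\<in>?A. Iin M v S + (\<Sum>S'\<in>?A - {S}. num M v S S'))"
  proof (rule sum.cong[OF refl])
    fix S assume "S \<in> ?A"
    have "(\<Sum>S'\<in>?A - {S}. num M v S S') = (\<Sum>S'\<in>?A - {S}. \<Sum>T\<in>S. \<Sum>e\<in>UNIV. (if adj M e \<inter> S' \<noteq> {} then 1 else 0) * ?f T e)"
      by (simp add: num_alt ind)
    also have "\<dots> = (\<Sum>T\<in>S. \<Sum>S'\<in>?A - {S}. \<Sum>e\<in>UNIV. (if adj M e \<inter> S' \<noteq> {} then 1 else 0) * ?f T e)"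
      by (rule sum.swap)
    also have "\<dots> = (\<Sum>T\<in>S. \<Sum>e\<in>UNIV. \<Sum>S'\<in>?A - {S}. (if adj M e \<inter> S' \<noteq> {} then 1 else 0) * ?f T e)"
      by (rule sum.cong[OF refl], rule sum.swap)
    also have "\<dots> = (\<Sum>T\<in>S. \<Sum>e\<in>UNIV. (\<Sum>S'\<in>?A - {S}. if adj M e \<inter> S' \<noteq> {} then 1 else 0) * ?f T e)"
      by (simp only: sum_distrib_right)
    finally have n: "(\<Sum>S'\<in>?A - {S}. num M v S S') = \<dots>" .
    have i: "Iin M v S = (\<Sum>T\<in>S. \<Sum>e\<in>UNIV. (if adj M e \<subseteq> S then 1 else 0) * ?f T e)"
      unfolding Iin_def by (simp add: ind)
    show "(\<Sum>T\<in>S. \<Sum>e\<in>UNIV. ((if adj M e \<subseteq> S then 1 else 0) +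
     (\<Sum>S'\<in>?A - {S}. if adj M e \<inter> S' \<noteq> {} then 1 else 0)) * ?f T e) = Iin M v S + (\<Sum>S'\<in>?A - {S}. num M v S S')"
      unfolding n i by (simp only: distrib_right sum.distrib)
  qed
  also have "\<dots> = (\<Sum>S\<in>?A. Iin M v S) + (\<Sum>S\<in>?A. \<Sum>S'\<in>?A - {S}. num M v S S')"
    by (rule sum.distrib)
  finally show ?thesis .
qed

lemma Iin_cong: "(\<forall>T\<in>X. v T = w T) \<Longrightarrow> Iin M v X = Iin M w X"
  unfolding Iin_def
proof (rule sum.cong[OF refl])
  fix x assume "\<forall>T\<in>X. v T = w T" "x \<in> X"
  then have "v x = w x" by blast
  then show "(\<Sum>e\<in>UNIV. if adj M e \<subseteq> X then m_inc M x e * v x e else 0) =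
        (\<Sum>e\<in>UNIV. if adj M e \<subseteq> X then m_inc M x e * w x e else 0)"
    by (rule arg_cong[where f="\<lambda>g. \<Sum>e\<in>UNIV. if adj M e \<subseteq> X then m_inc M x e * g e else 0"])
qed

lemma num_cong: "(\<forall>T\<in>X. v T = w T) \<Longrightarrow> num M v X X' = num M w X X'"
  unfolding num_def by (rule sum.cong[OF refl], rule sum.cong[OF refl]) simp

lemma Phi_cong: "(\<forall>T\<in>X. v T = w T) \<Longrightarrow> Phi M v X = Phi M w X"
  unfolding Phi_def
proof (rule sum.cong[OF refl])
  fix x assume "\<forall>T\<in>X. v T = w T" "x \<in> X"
  then have "v x = w x" by blast
  then show "(\<Sum>e\<in>UNIV. m_inc M x e * v x e) = (\<Sum>e\<in>UNIV. m_inc M x e * w x e)"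
    by (rule arg_cong[where f="\<lambda>g. \<Sum>e\<in>UNIV. m_inc M x e * g e"])
qed

lemma faces_sym: "(a,b) \<in> faces M m \<longleftrightarrow> (b,a) \<in> faces M m"
  unfolding faces_def using eb_sym by blast

lemma sub_swap: "sub M k X' X = (\<lambda>(a,b). (b,a)) ` sub M k X X'"
proof
  show "sub M k X' X \<subseteq> (\<lambda>(a,b). (b,a)) ` sub M k X X'"
  proof
    fix p assume p: "p \<in> sub M k X' X"
    obtain a b where ab: "p = (a,b)" by (cases p)
    have "(b,a) \<in> sub M k X X'" using p ab faces_sym unfolding sub_def by blast
    then show "p \<in> (\<lambda>(a,b). (b,a)) ` sub M k X X'" using ab by force
  qed
  show "(\<lambda>(a,b). (b,a)) ` sub M k X X' \<subseteq> sub M k X' X"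
  proof
    fix p assume "p \<in> (\<lambda>(a,b). (b,a)) ` sub M k X X'"
    then obtain a b where ab: "(a,b) \<in> sub M k X X'" "p = (b,a)" by auto
    then show "p \<in> sub M k X' X" using faces_sym unfolding sub_def by auto
  qed
qed

lemma sum_sub_swap:
  "(\<Sum>(a,b)\<in>sub M k X' X. F a b) = (\<Sum>(a,b)\<in>sub M k X X'. F b a)"
proof (rule sum.reindex_bij_witness[where i="\<lambda>(a,b). (b,a)" and j="\<lambda>(a,b). (b,a)"])
  fix p assume "p \<in> sub M k X X'"
  then have "(case p of (a, b) \<Rightarrow> (b, a)) \<in> (\<lambda>(a,b). (b,a)) ` sub M k X X'" by (rule imageI)
  then show "(case p of (a, b) \<Rightarrow> (b, a)) \<in> sub M k X' X" using sub_swap[of M k X' X] by simp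
next
  fix p assume "p \<in> sub M k X' X"
  then have "(case p of (a, b) \<Rightarrow> (b, a)) \<in> (\<lambda>(a,b). (b,a)) ` sub M k X' X" by (rule imageI)
  then show "(case p of (a, b) \<Rightarrow> (b, a)) \<in> sub M k X X'" using sub_swap[of M k X X'] by simp
qed auto

lemma cavg_sub: "cavg M k w X X' = (\<Sum>(a,b)\<in>sub M k X X'. flen M a b * dval M w a b) / (\<Sum>(a,b)\<in>sub M k X X'. flen M a b)"
  unfolding cavg_def sub_def by simp

lemma numsub:
  assumes v: "valid_setting M"
  shows "(\<Sum>(a,b)\<in>sub M k X X'. flen M a b * dval M w a b) = (\<Sum>(a,b)\<in>sub M k X X'. num M w a b)"
  by (rule sum.cong[OF refl]) (auto simp: num_eq[OF v])

lemma D_zero: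
  assumes v: "valid_setting M" and "(\<Sum>(a,b)\<in>sub M k X X'. flen M a b) = 0"
  shows "sub M k X X' = {}"
proof (rule ccontr)
  assume "sub M k X X' \<noteq> {}"
  have "(\<Sum>(a,b)\<in>sub M k X X'. flen M a b) > 0"
  proof (rule sum_pos)
    show "finite (sub M k X X')" by simp
    show "sub M k X X' \<noteq> {}" by fact
    show "\<And>i. i \<in> sub M k X X' \<Longrightarrow> 0 < (case i of (a, b) \<Rightarrow> flen M a b)"
    proof -
      fix i assume "i \<in> sub M k X X'"
      then obtain a b where "i = (a,b)" "edges_between M a b \<noteq> {}" unfolding sub_def faces_def by blast
      then show "0 < (case i of (a, b) \<Rightarrow> flen M a b)" using flen_pos[OF v] by simp
    qed
  qed
  then show False using assms(2) by simp
qed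

lemma WtAnti:
  assumes v: "valid_setting M" and j: "1 \<le> j" "j \<le> m_L M - 1"
    and w: "w \<in> Wt_of M j Ws" and S: "S \<in> m_dec M j" "S' \<in> m_dec M j" "S \<noteq> S'"
  shows "num M w S S' = - num M w S' S"
proof (cases "(S,S') \<in> faces M j")
  case False
  then have "edges_between M S S' = {}" using S unfolding faces_def by blast
  moreover then have "edges_between M S' S = {}" using eb_sym by metis
  ultimately show ?thesis using num_empty[of M S S' w] num_empty[of M S' S w] by simp
next
  case True
  have c: "cavg M j w S S' = - cavg M j w S' S" using w True unfolding Wt_of_def by blast
  have n1: "num M w S S' = (\<Sum>(a,b)\<in>sub M j S S'. num M w a b)" by (rule RG[OF v j S])
  have n2: "num M w S' S = (\<Sum>(a,b)\<in>sub M j S' S. num M w a b)" using RG[OF v j S(2,1)] S(3) by simp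
  let ?D = "(\<Sum>(a,b)\<in>sub M j S S'. flen M a b)"
  have D2: "(\<Sum>(a,b)\<in>sub M j S' S. flen M a b) = ?D"
    using sum_sub_swap[of "\<lambda>a b. flen M a b"] flen_sym by (simp add: flen_sym)
  show ?thesis
  proof (cases "?D = 0")
    case True
    then have e: "sub M j S S' = {}" using D_zero[OF v] by blast
    then have "sub M j S' S = {}" using sub_swap by (metis image_empty)
    then show ?thesis using n1 n2 e by simp
  next
    case False
    have "cavg M j w S S' = num M w S S' / ?D" unfolding cavg_sub numsub[OF v] n1 ..
    moreover have "cavg M j w S' S = num M w S' S / ?D" unfolding cavg_sub numsub[OF v] n2 D2 ..
    ultimately show ?thesis using c False by (simp add: field_simps)
  qed
qed


lemma rt0edge:
  assumes v: "valid_setting M" and u: "u \<in> RT0 M" and A: "adj M e \<subseteq> X"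
  shows "(\<Sum>T\<in>X. m_inc M T e * u T e) = 0"
proof -
  have "(\<Sum>T\<in>X. m_inc M T e * u T e) = (\<Sum>T\<in>adj M e. m_inc M T e * u T e)"
  proof (rule sum.mono_neutral_right)
    show "finite X" by simp
    show "adj M e \<subseteq> X" by (rule A)
    show "\<forall>i\<in>X - adj M e. m_inc M i e * u i e = 0" unfolding adj_def by simp
  qed
  also have "\<dots> = 0"
  proof (cases "adj M e = {}")
    case True then show ?thesis by simp
  next
    case False
    then obtain T0 where T0: "T0 \<in> adj M e" by blast
    show ?thesis
    proof (cases "\<forall>T'\<in>adj M e. T' = T0")
      case True
      then have a: "adj M e = {T0}" using T0 by blast
      have "m_inc M T0 e \<noteq> 0 \<and> (\<forall>T'. m_inc M T' e \<noteq> 0 \<longrightarrow> T' = T0)"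
        using T0 True unfolding adj_def by blast
      then have "u T0 e = 0" using u unfolding RT0_def by blast
      then show ?thesis using a by simp
    next
      case False
      then obtain T1 where T1: "T1 \<in> adj M e" "T1 \<noteq> T0" by blast
      have a: "adj M e = {T0, T1}" using adj2[OF v T0 T1(1) _ T1(2)[symmetric]] T0 T1 by blast
      have "u T1 e = u T0 e" using u T0 T1 unfolding RT0_def adj_def by blast
      moreover have "m_inc M T1 e = - m_inc M T0 e" using vopp[OF v T1(2)[symmetric] T0 T1(1)] .
      ultimately show ?thesis using a T1(2) by simp
    qed
  qed
  finally show ?thesis .
qed

lemma I0:
  assumes v: "valid_setting M"
  shows "1 \<le> k \<Longrightarrow> k \<le> m_L M - 1 \<Longrightarrow> w \<in> FluxW M k \<Longrightarrow> X \<in> m_dec M k \<Longrightarrow> Iin M w X = 0"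
proof (induction k arbitrary: w X)
  case 0 then show ?case by simp
next
  case (Suc j)
  show ?case
  proof (cases "j = 0")
    case True
    obtain u where u: "u \<in> Ufull M (Suc j)" "\<forall>T\<in>X. w T = u T"
      using Suc.prems(3,4) unfolding FluxW_def Wof_def by blast
    have uR: "u \<in> RT0 M" using u(1) True by simp
    have "Iin M w X = Iin M u X" by (rule Iin_cong[OF u(2)])
    also have "\<dots> = (\<Sum>e\<in>UNIV. \<Sum>T\<in>X. if adj M e \<subseteq> X then m_inc M T e * u T e else 0)"
      unfolding Iin_def by (rule sum.swap)
    also have "\<dots> = (\<Sum>e\<in>UNIV. if adj M e \<subseteq> X then (\<Sum>T\<in>X. m_inc M T e * u T e) else 0)"
      by (rule sum.cong[OF refl]) simp
    also have "\<dots> = 0"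
      by (rule sum.neutral) (simp add: rt0edge[OF v uR])
    finally show ?thesis .
  next
    case False
    then have j: "1 \<le> j" "j \<le> m_L M - 1" using Suc.prems by simp_all
    obtain u where u: "u \<in> Ufull M (Suc j)" "\<forall>T\<in>X. w T = u T"
      using Suc.prems(3,4) unfolding FluxW_def Wof_def by blast
    have uW: "u \<in> WtPi_of M j (FluxW M j)" using u(1) False unfolding FluxW_def by simp
    then have uWt: "u \<in> Wt_of M j (FluxW M j)" and uF: "u \<in> FluxW M j"
      unfolding WtPi_of_def Wt_of_def by auto
    let ?A = "{S\<in>m_dec M (Suc j - 1). S \<subseteq> X}"
    have "Iin M w X = Iin M u X" by (rule Iin_cong[OF u(2)])
    also have "\<dots> = (\<Sum>S\<in>?A. Iin M u S) + (\<Sum>S\<in>?A. \<Sum>S'\<in>?A - {S}. num M u S S')"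
      by (rule DI[OF v _ Suc.prems(2,4)]) simp
    also have "(\<Sum>S\<in>?A. Iin M u S) = 0"
    proof (rule sum.neutral, rule ballI)
      fix S assume "S \<in> ?A"
      then have "S \<in> m_dec M j" by simp
      then show "Iin M u S = 0" using Suc.IH[OF j uF] by blast
    qed
    also have "(\<Sum>S\<in>?A. \<Sum>S'\<in>?A - {S}. num M u S S') = 0"
    proof (rule antisum)
      show "finite ?A" by (rule finP)
      show "\<forall>S\<in>?A. \<forall>S'\<in>?A. S \<noteq> S' \<longrightarrow> num M u S S' = - num M u S' S"
      proof (intro ballI impI)
        fix S S' assume "S \<in> ?A" "S' \<in> ?A" "S \<noteq> S'"
        then show "num M u S S' = - num M u S' S" using WtAnti[OF v j uWt, of S S'] by simp
      qed
    qed
    finally show ?thesis by simp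
  qed
qed


definition Lin :: "('e::finite,'f::finite) bddc_setting \<Rightarrow> nat \<Rightarrow> ('e,'f) flux \<Rightarrow> bool" where
  "Lin M k v \<longleftrightarrow> (\<forall>X\<in>m_dec M k. Iin M v X = 0) \<and>
     (\<forall>X\<in>m_dec M k. \<forall>X'\<in>m_dec M k. X \<noteq> X' \<longrightarrow> num M v X X' = - num M v X' X)"

lemma lin_sum2:
  fixes c :: "'a \<Rightarrow> 'b \<Rightarrow> real"
  shows "(\<Sum>x\<in>A. \<Sum>y\<in>B. c x y * (a x y + b x y - d x y)) =
    (\<Sum>x\<in>A. \<Sum>y\<in>B. c x y * a x y) + (\<Sum>x\<in>A. \<Sum>y\<in>B. c x y * b x y) - (\<Sum>x\<in>A. \<Sum>y\<in>B. c x y * d x y)"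
proof -
  have "(\<Sum>x\<in>A. \<Sum>y\<in>B. c x y * (a x y + b x y - d x y)) =
     (\<Sum>x\<in>A. (\<Sum>y\<in>B. c x y * a x y) + (\<Sum>y\<in>B. c x y * b x y) - (\<Sum>y\<in>B. c x y * d x y))"
    by (simp only: right_diff_distrib distrib_left sum_subtractf sum.distrib)
  also have "\<dots> = (\<Sum>x\<in>A. \<Sum>y\<in>B. c x y * a x y) + (\<Sum>x\<in>A. \<Sum>y\<in>B. c x y * b x y) - (\<Sum>x\<in>A. \<Sum>y\<in>B. c x y * d x y)"
    by (simp only: sum_subtractf sum.distrib)
  finally show ?thesis .
qed

lemma Iin_alt: "Iin M v X = (\<Sum>T\<in>X. \<Sum>e\<in>UNIV. (if adj M e \<subseteq> X then m_inc M T e else 0) * v T e)"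
  unfolding Iin_def by (rule sum.cong[OF refl], rule sum.cong[OF refl]) simp

lemma Iin_lin: "Iin M (\<lambda>T e. a T e + b T e - c T e) X = Iin M a X + Iin M b X - Iin M c X"
  unfolding Iin_alt by (rule lin_sum2[where c="\<lambda>T e. if adj M e \<subseteq> X then m_inc M T e else 0" and a=a and b=b and d=c and A=X and B=UNIV])

lemma num_lin: "num M (\<lambda>T e. a T e + b T e - c T e) X X' = num M a X X' + num M b X X' - num M c X X'"
  unfolding num_def using lin_sum2[where c="\<lambda>e T. m_inc M T e" and a="\<lambda>e T. a T e" and b="\<lambda>e T. b T e" and d="\<lambda>e T. c T e" and A="edges_between M X X'" and B=X] by simp

lemma num_add: "num M (\<lambda>T e. a T e + b T e) X X' = num M a X X' + num M b X X'"
  unfolding num_def by (simp only: distrib_left sum.distrib)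

lemma LinI: "Lin M k a \<Longrightarrow> X \<in> m_dec M k \<Longrightarrow> Iin M a X = 0"
  unfolding Lin_def by (elim conjE) (erule bspec)

lemma LinN: "Lin M k a \<Longrightarrow> X \<in> m_dec M k \<Longrightarrow> X' \<in> m_dec M k \<Longrightarrow> X \<noteq> X' \<Longrightarrow> num M a X X' = - num M a X' X"
  unfolding Lin_def by (elim conjE) (drule bspec, assumption, drule bspec, assumption, erule mp)

lemma Lin_comb: "Lin M k a \<Longrightarrow> Lin M k b \<Longrightarrow> Lin M k c \<Longrightarrow> Lin M k (\<lambda>T e. a T e + b T e - c T e)"
proof -
  assume a: "Lin M k a" and b: "Lin M k b" and c: "Lin M k c"
  show ?thesis unfolding Lin_def Iin_lin num_lin
  proof (intro conjI ballI impI)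
    fix X assume X: "X \<in> m_dec M k"
    show "Iin M a X + Iin M b X - Iin M c X = 0" using LinI[OF a X] LinI[OF b X] LinI[OF c X] by simp
  next
    fix X X' assume X: "X \<in> m_dec M k" "X' \<in> m_dec M k" "X \<noteq> X'"
    show "num M a X X' + num M b X X' - num M c X X' = - (num M a X' X + num M b X' X - num M c X' X)"
      using LinN[OF a X] LinN[OF b X] LinN[OF c X] by linarith
  qed
qed

lemma bf_lin_v: "bf M (\<lambda>T e. a T e + b T e - c T e) q = bf M a q + bf M b q - bf M c q"
proof -
  have "(\<Sum>T\<in>UNIV. q T * (\<Sum>e\<in>UNIV. m_inc M T e * (a T e + b T e - c T e))) =
        (\<Sum>T\<in>UNIV. \<Sum>e\<in>UNIV. q T * m_inc M T e * (a T e + b T e - c T e))"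
    by (simp add: sum_distrib_left mult.assoc)
  also have "\<dots> = (\<Sum>T\<in>UNIV. \<Sum>e\<in>UNIV. q T * m_inc M T e * a T e) + (\<Sum>T\<in>UNIV. \<Sum>e\<in>UNIV. q T * m_inc M T e * b T e)
      - (\<Sum>T\<in>UNIV. \<Sum>e\<in>UNIV. q T * m_inc M T e * c T e)"
    by (rule lin_sum2[where c="\<lambda>T e. q T * m_inc M T e" and a=a and b=b and d=c and A=UNIV and B=UNIV])
  finally show ?thesis unfolding bf_def by (simp add: sum_distrib_left mult.assoc)
qed

lemma bf_lin_q: "bf M v (\<lambda>T. q0 T + qI T) = bf M v q0 + bf M v qI"
  unfolding bf_def by (simp only: distrib_right sum.distrib minus_add)

lemma WtPi_sub: "w \<in> WtPi_of M j Ws \<Longrightarrow> w \<in> Wt_of M j Ws \<and> w \<in> Ws"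
  unfolding WtPi_of_def Wt_of_def by auto

lemma Ufull_Suc: "1 \<le> k \<Longrightarrow> Ufull M (Suc k) = WtPi_of M k (FluxW M k)"
  unfolding FluxW_def by simp

lemma Lin_WtilPi:
  assumes v: "valid_setting M" and k: "1 \<le> k" "k \<le> m_L M - 1" and w: "w \<in> WtilPi M k"
  shows "Lin M k w"
proof -
  have w2: "w \<in> Wt_of M k (FluxW M k)" "w \<in> FluxW M k" using WtPi_sub w unfolding WtilPi_def by blast+
  show ?thesis unfolding Lin_def
  proof (intro conjI ballI impI)
    fix X assume "X \<in> m_dec M k"
    then show "Iin M w X = 0" using I0[OF v k w2(2)] by blast
  next
    fix X X' assume "X \<in> m_dec M k" "X' \<in> m_dec M k" "X \<noteq> X'"
    then show "num M w X X' = - num M w X' X" by (rule WtAnti[OF v k w2(1)])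
  qed
qed

lemma LinU:
  assumes v: "valid_setting M" and k: "1 \<le> k" "Suc k \<le> m_L M - 1" and w: "w \<in> FluxU M (Suc k)"
  shows "Lin M k w"
proof -
  have k': "k \<le> m_L M - 1" using k by simp
  have wW: "w \<in> FluxW M (Suc k)" using w unfolding FluxU_def by blast
  have lift: "\<exists>Y\<in>m_dec M (Suc k). X \<subseteq> Y \<and> (\<exists>u\<in>WtPi_of M k (FluxW M k). \<forall>T\<in>Y. w T = u T)"
    if X: "X \<in> m_dec M k" for X
  proof -
    obtain Y where Y: "Y \<in> m_dec M (Suc k)" "X \<subseteq> Y" using vnest[OF v _ k(2), of X] X by auto
    obtain u where u: "u \<in> Ufull M (Suc k)" "\<forall>T\<in>Y. w T = u T" using wW Y(1) unfolding FluxW_def Wof_def by blast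
    have "u \<in> WtPi_of M k (FluxW M k)" using u(1) Ufull_Suc[OF k(1), of M] by (simp only:)
    then show ?thesis using Y u(2) by blast
  qed
  show ?thesis unfolding Lin_def
  proof (intro conjI ballI impI)
    fix X assume X: "X \<in> m_dec M k"
    obtain Y u where Y: "Y \<in> m_dec M (Suc k)" "X \<subseteq> Y" and u: "u \<in> WtPi_of M k (FluxW M k)" "\<forall>T\<in>Y. w T = u T"
      using lift[OF X] by blast
    have "Iin M w X = Iin M u X" using u(2) Y(2) by (intro Iin_cong) blast
    also have "\<dots> = 0" using I0[OF v k(1) k' _ X] WtPi_sub[OF u(1)] by blast
    finally show "Iin M w X = 0" .
  next
    fix X X' assume X: "X \<in> m_dec M k" and X': "X' \<in> m_dec M k" and XX: "X \<noteq> X'"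
    obtain Y u where Y: "Y \<in> m_dec M (Suc k)" "X \<subseteq> Y" and u: "u \<in> WtPi_of M k (FluxW M k)" "\<forall>T\<in>Y. w T = u T"
      using lift[OF X] by blast
    obtain Y' u' where Y': "Y' \<in> m_dec M (Suc k)" "X' \<subseteq> Y'" and u': "u' \<in> WtPi_of M k (FluxW M k)" "\<forall>T\<in>Y'. w T = u' T"
      using lift[OF X'] by blast
    show "num M w X X' = - num M w X' X"
    proof (cases "Y = Y'")
      case True
      have "num M w X X' = num M u X X'" using u(2) Y(2) by (intro num_cong) blast
      moreover have "num M w X' X = num M u X' X" using u(2) Y'(2) True by (intro num_cong) blast
      moreover have "num M u X X' = - num M u X' X"
        by (rule WtAnti[OF v k(1) k' _ X X' XX]) (use WtPi_sub[OF u(1)] in blast)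
      ultimately show ?thesis by simp
    next
      case False
      show ?thesis
      proof (cases "(X, X') \<in> faces M k")
        case fa: True
        have PS: "part (m_dec M (Suc k))" using part_dec[OF v k(2)] .
        have "X \<noteq> {}" "X' \<noteq> {}" using part_ne[OF part_dec[OF v k'] X] part_ne[OF part_dec[OF v k'] X'] by auto
        then obtain T T' where TT: "T \<in> X" "T' \<in> X'" by blast
        have "\<not> (\<exists>R\<in>m_dec M (Suc k). X \<subseteq> R \<and> X' \<subseteq> R)"
        proof
          assume "\<exists>R\<in>m_dec M (Suc k). X \<subseteq> R \<and> X' \<subseteq> R"
          then obtain R where R: "R \<in> m_dec M (Suc k)" "X \<subseteq> R" "X' \<subseteq> R" by blast
          have "R = Y" using part_uniq[OF PS R(1) Y(1), of T] TT R(2) Y(2) by blast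
          moreover have "R = Y'" using part_uniq[OF PS R(1) Y'(1), of T'] TT R(3) Y'(2) by blast
          ultimately show False using False by simp
        qed
        then have "(X, X') \<in> Gamma M (Suc k)" using fa unfolding Gamma_def by simp
        then have "dval M w X X' = - dval M w X' X" using w unfolding FluxU_def by blast
        then have "flen M X X' * dval M w X X' = - (flen M X' X * dval M w X' X)" using flen_sym[of M X X'] by simp
        then show ?thesis using num_eq[OF v, of X X' w] num_eq[OF v, of X' X w] by linarith
      next
        case nf: False
        then have "edges_between M X X' = {}" using X X' XX unfolding faces_def by blast
        moreover then have "edges_between M X' X = {}" using eb_sym by metis
        ultimately show ?thesis using num_empty[of M X X' w] num_empty[of M X' X w] by simp
      qed
    qed
  qed
qed


lemma kval_eq:
  assumes v: "valid_setting M" and k: "1 \<le> k" "k \<le> m_L M - 1"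
    and S: "S \<in> m_dec M (k - 1)" "S \<subseteq> X" and X: "X \<in> m_dec M k"
  shows "kval M S = kval M X"
proof -
  obtain Z where Z: "Z \<in> m_dec M (m_L M - 1)" "X \<subseteq> Z" using up[OF v order.refl k(2) X] by blast
  have "k - 1 \<le> m_L M - 1" using k by simp
  then have "S \<noteq> {}" using part_ne[OF part_dec[OF v] S(1)] by blast
  then have "\<exists>T. T \<in> S" by blast
  then have tS: "(SOME T. T \<in> S) \<in> S" by (rule someI_ex)
  have "X \<noteq> {}" using part_ne[OF part_dec[OF v k(2)] X] .
  then have "\<exists>T. T \<in> X" by blast
  then have tX: "(SOME T. T \<in> X) \<in> X" by (rule someI_ex)
  have "m_k M (SOME T. T \<in> S) = m_k M (SOME T. T \<in> X)"
    by (rule vtop[OF v Z(1)]) (use tS tX S(2) Z(2) in blast)+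
  then show ?thesis unfolding kval_def .
qed

lemma ewt_sum:
  assumes v: "valid_setting M"
  shows "ewt M X X' + ewt M X' X = 1"
proof -
  have "kval M X > 0" "kval M X' > 0" unfolding kval_def using vk[OF v] by auto
  then have a: "kval M X powr (- m_gamma M) > 0" "kval M X' powr (- m_gamma M) > 0" by auto
  have gen: "x / (x + y) + y / (y + x) = 1" if "x > 0" "y > 0" for x y :: real
  proof -
    have "x + y > 0" using that by simp
    then have "x / (x + y) + y / (x + y) = 1" by (simp add: add_divide_distrib[symmetric])
    then show ?thesis by (simp add: add.commute)
  qed
  show ?thesis unfolding ewt_def by (rule gen[OF a])
qed

lemma subGamma:
  assumes v: "valid_setting M" and k: "1 \<le> k" "k \<le> m_L M - 1"
    and X: "X \<in> m_dec M k" "X' \<in> m_dec M k" "X \<noteq> X'" and p: "(S,S') \<in> sub M k X X'"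
  shows "(S,S') \<in> Gamma M k"
proof -
  have f: "(S,S') \<in> faces M (k - 1)" "S \<subseteq> X" "S' \<subseteq> X'" using p unfolding sub_def by auto
  have P': "part (m_dec M (k - 1))" using part_dec[OF v] k by simp
  have Pk: "part (m_dec M k)" using part_dec[OF v k(2)] .
  have "S \<noteq> {}" "S' \<noteq> {}" using f(1) part_ne[OF P'] unfolding faces_def by auto
  then obtain T T' where TT: "T \<in> S" "T' \<in> S'" by blast
  have "\<not> (\<exists>R\<in>m_dec M k. S \<subseteq> R \<and> S' \<subseteq> R)"
  proof
    assume "\<exists>R\<in>m_dec M k. S \<subseteq> R \<and> S' \<subseteq> R"
    then obtain R where R: "R \<in> m_dec M k" "S \<subseteq> R" "S' \<subseteq> R" by blast
    have "R = X" using part_uniq[OF Pk R(1) X(1), of T] TT f R by blast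
    moreover have "R = X'" using part_uniq[OF Pk R(1) X(2), of T'] TT f R by blast
    ultimately show False using X(3) by simp
  qed
  then show ?thesis using f(1) unfolding Gamma_def by simp
qed

lemma UI0:
  assumes v: "valid_setting M" and k: "1 \<le> k" "k \<le> m_L M - 1"
    and w: "w \<in> FluxUI M k" and X: "X \<in> m_dec M k"
  shows "Phi M w X = 0"
proof -
  have wW: "w \<in> FluxW M k" using w unfolding FluxUI_def FluxU_def by blast
  have "Phi M w X = Iin M w X + (\<Sum>X'\<in>m_dec M k - {X}. num M w X X')"
    by (rule KC[OF v part_dec[OF v k(2)] X])
  also have "Iin M w X = 0" by (rule I0[OF v k wW X])
  also have "(\<Sum>X'\<in>m_dec M k - {X}. num M w X X') = 0"
  proof (rule sum.neutral, rule ballI)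
    fix X' assume X': "X' \<in> m_dec M k - {X}"
    then have X'': "X' \<in> m_dec M k" "X \<noteq> X'" by auto
    have "num M w X X' = (\<Sum>(S,S')\<in>sub M k X X'. num M w S S')" by (rule RG[OF v k X X''])
    also have "\<dots> = 0"
    proof (rule sum.neutral, rule ballI)
      fix p assume p: "p \<in> sub M k X X'"
      obtain S S' where pp: "p = (S,S')" by (cases p)
      have "(S,S') \<in> Gamma M k" by (rule subGamma[OF v k X X'']) (use p pp in simp)
      then have "dval M w S S' = 0" using w unfolding FluxUI_def by blast
      then have "num M w S S' = 0" using num_eq[OF v, of S S' w] by simp
      then show "(case p of (S, S') \<Rightarrow> num M w S S') = 0" using pp by simp
    qed
    finally show "num M w X X' = 0" .
  qed
  finally show ?thesis by simp
qed

lemma WD0: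
  assumes v: "valid_setting M" and k: "1 \<le> k" "k \<le> m_L M - 1"
    and w: "w \<in> WtilD M k" and X: "X \<in> m_dec M k" "X' \<in> m_dec M k" "X \<noteq> X'"
  shows "num M w X X' = 0"
proof (cases "(X, X') \<in> faces M k")
  case False
  then have "edges_between M X X' = {}" using X unfolding faces_def by blast
  then show ?thesis by (rule num_empty)
next
  case True
  have c: "cavg M k w X X' = 0" using w True unfolding WtilD_def WtD_of_def by blast
  have n1: "num M w X X' = (\<Sum>(a,b)\<in>sub M k X X'. num M w a b)" by (rule RG[OF v k X])
  let ?D = "(\<Sum>(a,b)\<in>sub M k X X'. flen M a b)"
  show ?thesis
  proof (cases "?D = 0")
    case True
    then have e: "sub M k X X' = {}" using D_zero[OF v] by blast
    then show ?thesis using n1 by simp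
  next
    case False
    have "cavg M k w X X' = num M w X X' / ?D" unfolding cavg_sub numsub[OF v] n1 ..
    then show ?thesis using c False by simp
  qed
qed

lemma UB:
  assumes v: "valid_setting M" and k: "1 \<le> k" "k \<le> m_L M - 1"
    and E: "Erel M k (\<lambda>T e. wD T e + un T e) uB" and wD: "wD \<in> WtilD M k" and un: "Lin M k un"
    and X: "X \<in> m_dec M k" "X' \<in> m_dec M k" "X \<noteq> X'"
  shows "num M uB X X' = num M un X X'"
proof -
  let ?w = "\<lambda>T e. wD T e + un T e"
  let ?a = "ewt M X X'" and ?b = "ewt M X' X"
  have Ed: "\<forall>(S,S')\<in>faces M (k - 1).
        dval M uB S S' = (if (S,S') \<in> Gamma M k
                         then ewt M S S' * dval M ?w S S' - ewt M S' S * dval M ?w S' S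
                         else dval M ?w S S')" using E unfolding Erel_def by blast
  have "num M uB X X' = (\<Sum>(S,S')\<in>sub M k X X'. num M uB S S')" by (rule RG[OF v k X])
  also have "\<dots> = (\<Sum>(S,S')\<in>sub M k X X'. ?a * num M ?w S S' - ?b * num M ?w S' S)"
  proof (rule sum.cong[OF refl])
    fix p assume p: "p \<in> sub M k X X'"
    obtain S S' where pp: "p = (S,S')" by (cases p)
    have f: "(S,S') \<in> faces M (k - 1)" "S \<subseteq> X" "S' \<subseteq> X'" using p pp unfolding sub_def by auto
    have G: "(S,S') \<in> Gamma M k" by (rule subGamma[OF v k X]) (use p pp in simp)
    have SS: "S \<in> m_dec M (k - 1)" "S' \<in> m_dec M (k - 1)" using f(1) unfolding faces_def by auto
    have "ewt M S S' = ?a" unfolding ewt_def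
      using kval_eq[OF v k SS(1) f(2) X(1)] kval_eq[OF v k SS(2) f(3) X(2)] by simp
    moreover have "ewt M S' S = ?b" unfolding ewt_def
      using kval_eq[OF v k SS(1) f(2) X(1)] kval_eq[OF v k SS(2) f(3) X(2)] by simp
    moreover have "dval M uB S S' = ewt M S S' * dval M ?w S S' - ewt M S' S * dval M ?w S' S"
      using Ed f(1) G by auto
    ultimately have d: "dval M uB S S' = ?a * dval M ?w S S' - ?b * dval M ?w S' S" by simp
    have "num M uB S S' = flen M S S' * dval M uB S S'" using num_eq[OF v] by simp
    also have "\<dots> = ?a * (flen M S S' * dval M ?w S S') - ?b * (flen M S' S * dval M ?w S' S)"
      unfolding d using flen_sym[of M S S'] by (simp add: algebra_simps)
    also have "\<dots> = ?a * num M ?w S S' - ?b * num M ?w S' S" using num_eq[OF v] by simp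
    finally show "(case p of (S, S') \<Rightarrow> num M uB S S') = (case p of (S, S') \<Rightarrow> ?a * num M ?w S S' - ?b * num M ?w S' S)"
      using pp by simp
  qed
  also have "\<dots> = ?a * (\<Sum>(S,S')\<in>sub M k X X'. num M ?w S S') - ?b * (\<Sum>(S,S')\<in>sub M k X X'. num M ?w S' S)"
    by (simp add: sum_subtractf sum_distrib_left case_prod_unfold)
  also have "(\<Sum>(S,S')\<in>sub M k X X'. num M ?w S S') = num M ?w X X'" by (rule RG[OF v k X, symmetric])
  also have "(\<Sum>(S,S')\<in>sub M k X X'. num M ?w S' S) = (\<Sum>(S,S')\<in>sub M k X' X. num M ?w S S')"
    by (rule sum_sub_swap[symmetric])
  also have "\<dots> = num M ?w X' X" using RG[OF v k X(2,1)] X(3) by simp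
  finally have e1: "num M uB X X' = ?a * num M ?w X X' - ?b * num M ?w X' X" .
  have "num M ?w X X' = num M un X X'" using num_add[of M wD un X X'] WD0[OF v k wD X] by simp
  moreover have "num M ?w X' X = num M un X' X" using num_add[of M wD un X' X] WD0[OF v k wD X(2,1)] X(3) by simp
  moreover have "num M un X' X = - num M un X X'" using LinN[OF un X(2,1)] X(3) by simp
  ultimately have "num M uB X X' = (?a + ?b) * num M un X X'" using e1 by (simp add: algebra_simps)
  then show ?thesis using ewt_sum[OF v] by simp
qed

lemma BFQ:
  fixes P :: "('e::finite) set set"
  assumes P: "part P" and q: "\<forall>X\<in>P. \<forall>T\<in>X. \<forall>T'\<in>X. q T = q T'"
    and ph: "\<forall>X\<in>P. Phi M v X = Phi M v' X"
  shows "bf M v q = bf M v' q"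
proof -
  have gen: "(\<Sum>T\<in>X. q T * (\<Sum>e\<in>UNIV. m_inc M T e * w T e)) = (if X = {} then 0 else q (SOME T. T \<in> X) * Phi M w X)"
    if X: "X \<in> P" for X w
  proof (cases "X = {}")
    case True then show ?thesis by simp
  next
    case False
    then have "\<exists>T. T \<in> X" by blast
    then have t: "(SOME T. T \<in> X) \<in> X" by (rule someI_ex)
    have "(\<Sum>T\<in>X. q T * (\<Sum>e\<in>UNIV. m_inc M T e * w T e)) = (\<Sum>T\<in>X. q (SOME T. T \<in> X) * (\<Sum>e\<in>UNIV. m_inc M T e * w T e))"
    proof (rule sum.cong[OF refl])
      fix T assume "T \<in> X"
      then have "q T = q (SOME T. T \<in> X)" using q X t by blast
      then show "q T * (\<Sum>e\<in>UNIV. m_inc M T e * w T e) = q (SOME T. T \<in> X) * (\<Sum>e\<in>UNIV. m_inc M T e * w T e)" by simp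
    qed
    also have "\<dots> = q (SOME T. T \<in> X) * Phi M w X" unfolding Phi_def by (simp add: sum_distrib_left)
    finally show ?thesis using False by simp
  qed
  have "(\<Sum>T\<in>UNIV. q T * (\<Sum>e\<in>UNIV. m_inc M T e * v T e)) = (\<Sum>X\<in>P. \<Sum>T\<in>X. q T * (\<Sum>e\<in>UNIV. m_inc M T e * v T e))"
    by (rule sumall[OF P])
  also have "\<dots> = (\<Sum>X\<in>P. \<Sum>T\<in>X. q T * (\<Sum>e\<in>UNIV. m_inc M T e * v' T e))"
  proof (rule sum.cong[OF refl])
    fix X assume X: "X \<in> P"
    show "(\<Sum>T\<in>X. q T * (\<Sum>e\<in>UNIV. m_inc M T e * v T e)) = (\<Sum>T\<in>X. q T * (\<Sum>e\<in>UNIV. m_inc M T e * v' T e))"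
      unfolding gen[OF X] using ph X by simp
  qed
  also have "\<dots> = (\<Sum>T\<in>UNIV. q T * (\<Sum>e\<in>UNIV. m_inc M T e * v' T e))"
    by (rule sumall[OF P, symmetric])
  finally show ?thesis unfolding bf_def by simp
qed

lemma BF0:
  fixes P :: "('e::finite) set set"
  assumes P: "part P" and q: "\<forall>X\<in>P. \<forall>T\<in>X. \<forall>T'\<in>X. q T = q T'"
    and ph: "\<forall>X\<in>P. Phi M v X = 0"
  shows "bf M v q = 0"
proof -
  have "bf M v q = bf M (\<lambda>T e. 0) q" by (rule BFQ[OF P q]) (use ph in \<open>simp add: Phi_def\<close>)
  also have "\<dots> = 0" unfolding bf_def by simp
  finally show ?thesis .
qed


lemma Qsp_zero: "q \<in> Qsp M k \<Longrightarrow> (\<Sum>T\<in>UNIV. m_area M T * q T) = 0"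
  unfolding Qsp_def Q0_def Qzero_def by (auto split: if_splits)

lemma qdec:
  assumes v: "valid_setting M" and k: "1 \<le> k" "k \<le> m_L M - 1" and q: "q \<in> Qsp M k"
  shows "\<exists>q0 qI. q0 \<in> Q0 M k \<and> qI \<in> QI M k \<and> q = (\<lambda>T. q0 T + qI T)"
proof -
  let ?P = "m_dec M k"
  have P: "part ?P" by (rule part_dec[OF v k(2)])
  define reg where "reg T = (SOME X. X \<in> ?P \<and> T \<in> X)" for T
  have regX: "reg T = X" if "X \<in> ?P" "T \<in> X" for T X
  proof -
    have "\<exists>X. X \<in> ?P \<and> T \<in> X" using that by blast
    then have r: "reg T \<in> ?P \<and> T \<in> reg T" unfolding reg_def by (rule someI_ex)
    show ?thesis by (rule part_uniq[OF P conjunct1[OF r] that(1) conjunct2[OF r] that(2)])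
  qed
  define A where "A X = (\<Sum>T\<in>X. m_area M T)" for X
  define N where "N X = (\<Sum>T\<in>X. m_area M T * q T)" for X
  define q0 where "q0 T = N (reg T) / A (reg T)" for T
  define qI where "qI T = q T - q0 T" for T
  have Apos: "A X > 0" if "X \<in> ?P" for X
    unfolding A_def by (rule sum_pos) (simp_all add: part_ne[OF P that] varea[OF v])
  have q0X: "q0 T = N X / A X" if "X \<in> ?P" "T \<in> X" for T X
    unfolding q0_def regX[OF that] ..
  have blk: "(\<Sum>T\<in>X. m_area M T * q0 T) = N X" if X: "X \<in> ?P" for X
  proof -
    have "(\<Sum>T\<in>X. m_area M T * q0 T) = (\<Sum>T\<in>X. m_area M T * (N X / A X))"
      by (rule sum.cong[OF refl]) (simp add: q0X[OF X])
    also have "\<dots> = A X * (N X / A X)" unfolding A_def by (rule sum_distrib_right[symmetric])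
    also have "\<dots> = N X" using Apos[OF X] by simp
    finally show ?thesis .
  qed
  have z0: "(\<Sum>T\<in>UNIV. m_area M T * q0 T) = 0"
  proof -
    have "(\<Sum>T\<in>UNIV. m_area M T * q0 T) = (\<Sum>X\<in>?P. \<Sum>T\<in>X. m_area M T * q0 T)" by (rule sumall[OF P])
    also have "\<dots> = (\<Sum>X\<in>?P. N X)" by (rule sum.cong[OF refl]) (rule blk)
    also have "\<dots> = (\<Sum>T\<in>UNIV. m_area M T * q T)" unfolding N_def by (rule sumall[OF P, symmetric])
    also have "\<dots> = 0" by (rule Qsp_zero[OF q])
    finally show ?thesis .
  qed
  have c0: "\<forall>R\<in>?P. \<forall>T\<in>R. \<forall>T'\<in>R. q0 T = q0 T'"
  proof (intro ballI)
    fix R T T' assume "R \<in> ?P" "T \<in> R" "T' \<in> R"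
    then show "q0 T = q0 T'" using q0X[of R T] q0X[of R T'] by presburger
  qed
  have Q0: "q0 \<in> Q0 M k" unfolding Q0_def Qzero_def using z0 c0 by blast
  have zI: "(\<Sum>T\<in>UNIV. m_area M T * qI T) = 0"
    unfolding qI_def using z0 Qsp_zero[OF q] by (simp add: right_diff_distrib sum_subtractf)
  have QIsp: "qI \<in> Qsp M k"
  proof (cases "k \<le> 1")
    case True then show ?thesis unfolding Qsp_def Qzero_def using zI by simp
  next
    case False
    then have qq: "q \<in> Q0 M (k - 1)" using q unfolding Qsp_def by simp
    have "\<forall>R\<in>m_dec M (k - 1). \<forall>T\<in>R. \<forall>T'\<in>R. qI T = qI T'"
    proof (intro ballI)
      fix R T T' assume R: "R \<in> m_dec M (k - 1)" and T: "T \<in> R" "T' \<in> R"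
      have "q T = q T'" using qq R T unfolding Q0_def by blast
      moreover obtain X where X: "X \<in> ?P" "R \<subseteq> X" using vnest[OF v k R] by blast
      then have "T \<in> X" "T' \<in> X" using T by blast+
      then have "q0 T = q0 T'" using q0X[OF X(1)] by presburger
      ultimately show "qI T = qI T'" unfolding qI_def by simp
    qed
    moreover have "Qsp M k = Q0 M (k - 1)" using False unfolding Qsp_def by simp
    ultimately show ?thesis unfolding Q0_def Qzero_def using zI by blast
  qed
  have QI: "qI \<in> QI M k"
  proof -
    have "(\<Sum>T\<in>R. m_area M T * qI T) = 0" if R: "R \<in> ?P" for R
      unfolding qI_def using blk[OF R] by (simp add: right_diff_distrib sum_subtractf N_def)
    then show ?thesis unfolding QI_def using QIsp by simp
  qed
  have "q = (\<lambda>T. q0 T + qI T)" unfolding qI_def by simp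
  then show ?thesis using Q0 QI by blast
qed

lemma step:
  assumes v: "valid_setting M" and k: "1 \<le> k" "k \<le> m_L M - 1"
    and ls: "level_step M k r C u p"
    and C: "\<And>rB un pn. C rB un pn \<Longrightarrow> Lin M k un \<and> (\<forall>q\<in>Q0 M k. bf M un q = 0)"
  shows "(\<forall>q\<in>Qsp M k. bf M u q = 0) \<and> (\<exists>a\<in>FluxU M k. \<exists>b\<in>FluxU M k. \<exists>c\<in>FluxU M k. u = (\<lambda>T e. a T e + b T e - c T e))"
proof -
  obtain uI pI wD pID un pn uB vI qI where
    uI: "uI \<in> FluxUI M k" "\<forall>q\<in>QI M k. bf M uI q = 0"
    and wD: "wD \<in> WtilD M k"
    and Cu: "C (\<lambda>y. r y - af M uI y - bf M y pI) un pn"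
    and E: "Erel M k (\<lambda>T e. wD T e + un T e) uB"
    and vI: "vI \<in> FluxUI M k" "\<forall>q\<in>QI M k. bf M vI q = bf M uB q"
    and u: "u = (\<lambda>T e. uI T e + uB T e - vI T e)"
    using ls unfolding level_step_def by blast
  have un: "Lin M k un" "\<forall>q\<in>Q0 M k. bf M un q = 0" using C[OF Cu] by auto
  have uBU: "uB \<in> FluxU M k" using E unfolding Erel_def by blast
  have uIU: "uI \<in> FluxU M k" "vI \<in> FluxU M k" using uI(1) vI(1) unfolding FluxUI_def by auto
  have uBW: "uB \<in> FluxW M k" using uBU unfolding FluxU_def by blast
  have P: "part (m_dec M k)" by (rule part_dec[OF v k(2)])
  have part2: "\<forall>q\<in>Qsp M k. bf M u q = 0"
  proof
    fix q assume q: "q \<in> Qsp M k"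
    obtain q0 qq where q0: "q0 \<in> Q0 M k" and qq: "qq \<in> QI M k" and qe: "q = (\<lambda>T. q0 T + qq T)"
      using qdec[OF v k q] by blast
    have c0: "\<forall>X\<in>m_dec M k. \<forall>T\<in>X. \<forall>T'\<in>X. q0 T = q0 T'" using q0 unfolding Q0_def by blast
    have bI: "bf M u qq = 0"
      unfolding u bf_lin_v using uI(2) vI(2) qq by simp
    have b1: "bf M uI q0 = 0"
      by (rule BF0[OF P c0]) (use UI0[OF v k uI(1)] in blast)
    have b2: "bf M vI q0 = 0"
      by (rule BF0[OF P c0]) (use UI0[OF v k vI(1)] in blast)
    have b3: "bf M uB q0 = bf M un q0"
    proof (rule BFQ[OF P c0], rule ballI)
      fix X assume X: "X \<in> m_dec M k"
      have "Phi M uB X = Iin M uB X + (\<Sum>X'\<in>m_dec M k - {X}. num M uB X X')" by (rule KC[OF v P X])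
      also have "Iin M uB X = 0" by (rule I0[OF v k uBW X])
      also have "(\<Sum>X'\<in>m_dec M k - {X}. num M uB X X') = (\<Sum>X'\<in>m_dec M k - {X}. num M un X X')"
      proof (rule sum.cong[OF refl])
        fix X' assume "X' \<in> m_dec M k - {X}"
        then have X': "X' \<in> m_dec M k" "X \<noteq> X'" by auto
        show "num M uB X X' = num M un X X'" by (rule UB[OF v k E wD un(1) X X'])
      qed
      also have "0 + (\<Sum>X'\<in>m_dec M k - {X}. num M un X X') = Iin M un X + (\<Sum>X'\<in>m_dec M k - {X}. num M un X X')"
        using LinI[OF un(1) X] by simp
      also have "\<dots> = Phi M un X" by (rule KC[OF v P X, symmetric])
      finally show "Phi M uB X = Phi M un X" .
    qed
    have "bf M u q0 = 0" unfolding u bf_lin_v b1 b2 b3 using un(2) q0 by simp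
    then show "bf M u q = 0" unfolding qe bf_lin_q bI by simp
  qed
  show ?thesis using part2 u uIU uBU by blast
qed

lemma main:
  assumes v: "valid_setting M"
  shows "\<forall>k r u p. 1 \<le> k \<longrightarrow> k + n = m_L M - 1 \<longrightarrow> bddc M n k r u p \<longrightarrow>
     (\<forall>q\<in>Qsp M k. bf M u q = 0) \<and> (\<exists>a\<in>FluxU M k. \<exists>b\<in>FluxU M k. \<exists>c\<in>FluxU M k. u = (\<lambda>T e. a T e + b T e - c T e))"
proof (induction n)
  case 0
  show ?case
  proof (intro allI impI)
    fix k r u p assume k: "1 \<le> k" "k + 0 = m_L M - 1" and b: "bddc M 0 k r u p"
    have k2: "k \<le> m_L M - 1" using k by simp
    show "(\<forall>q\<in>Qsp M k. bf M u q = 0) \<and> (\<exists>a\<in>FluxU M k. \<exists>b\<in>FluxU M k. \<exists>c\<in>FluxU M k. u = (\<lambda>T e. a T e + b T e - c T e))"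
    proof (rule step[OF v k(1) k2])
      show "level_step M k r (coarse_solve M k) u p" using b by simp
      fix rB un pn assume "coarse_solve M k rB un pn"
      then have "un \<in> WtilPi M k" "\<forall>q\<in>Q0 M k. bf M un q = 0" unfolding coarse_solve_def by auto
      then show "Lin M k un \<and> (\<forall>q\<in>Q0 M k. bf M un q = 0)" using Lin_WtilPi[OF v k(1) k2] by blast
    qed
  qed
next
  case (Suc n)
  show ?case
  proof (intro allI impI)
    fix k r u p assume k: "1 \<le> k" "k + Suc n = m_L M - 1" and b: "bddc M (Suc n) k r u p"
    have k2: "k \<le> m_L M - 1" "Suc k \<le> m_L M - 1" using k by simp_all
    show "(\<forall>q\<in>Qsp M k. bf M u q = 0) \<and> (\<exists>a\<in>FluxU M k. \<exists>b\<in>FluxU M k. \<exists>c\<in>FluxU M k. u = (\<lambda>T e. a T e + b T e - c T e))"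
    proof (rule step[OF v k(1) k2(1)])
      show "level_step M k r (\<lambda>rB un pn. \<exists>rn. (\<forall>v\<in>FluxU M (Suc k). \<forall>y. Erel M k v y \<longrightarrow> rn v = rB y)
                        \<and> bddc M n (Suc k) rn un pn) u p" using b by simp
      fix rB un pn assume "\<exists>rn. (\<forall>v\<in>FluxU M (Suc k). \<forall>y. Erel M k v y \<longrightarrow> rn v = rB y) \<and> bddc M n (Suc k) rn un pn"
      then obtain rn where bn: "bddc M n (Suc k) rn un pn" by blast
      have kn: "Suc k + n = m_L M - 1" using k by simp
      have IH: "(\<forall>q\<in>Qsp M (Suc k). bf M un q = 0) \<and> (\<exists>a\<in>FluxU M (Suc k). \<exists>b\<in>FluxU M (Suc k). \<exists>c\<in>FluxU M (Suc k). un = (\<lambda>T e. a T e + b T e - c T e))"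
        by (rule Suc.IH[rule_format, of "Suc k" rn un pn]) (simp, rule kn, rule bn)
      then obtain a b c where abc: "a \<in> FluxU M (Suc k)" "b \<in> FluxU M (Suc k)" "c \<in> FluxU M (Suc k)" "un = (\<lambda>T e. a T e + b T e - c T e)"
        by blast
      have "Lin M k un" unfolding abc(4)
        by (rule Lin_comb; rule LinU[OF v k(1) k2(2)]) (simp_all add: abc)
      moreover have "Qsp M (Suc k) = Q0 M k" unfolding Qsp_def using k(1) by simp
      ultimately show "Lin M k un \<and> (\<forall>q\<in>Q0 M k. bf M un q = 0)" using IH by simp
    qed
  qed
qed

theorem lemma3:
  fixes M :: "('e::finite, 'f::finite) bddc_setting"
    and l :: nat
    and r :: "('e,'f) flux \<Rightarrow> real"
    and u :: "('e,'f) flux"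
    and p :: "'e \<Rightarrow> real"
  assumes "valid_setting M"
    and "1 \<le> l" and "l \<le> m_L M - 1"
    and "lin_functional_on (FluxU M l) r"
    and "bddc M (m_L M - 1 - l) l r u p"
  shows "\<forall>q\<in>Qsp M l. bf M u q = 0"
proof -
  have "l + (m_L M - 1 - l) = m_L M - 1" using assms(3) by simp
  then show ?thesis using main[OF assms(1), of "m_L M - 1 - l"] assms(2,5) by blast
qed

end
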